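(* Let $(M,g)$ be a Riemannian manifold, $\lambda\in\mathbb{R}$, $X$ a smooth vector field satisfying $R_{ab}=\tfrac12X_aX_b-\nabla_{(a}X_{b)}+\lambda g_{ab}$, and $\Gamma>0$ any smooth function. Set $K_a=\Gamma X_a+\nabla_a\Gamma$, $F=\tfrac12|X|^2-\tfrac12\nabla_aX^a+\lambda$, and define $A$ by $F=\frac{A}{\Gamma}+\frac{|K|^2}{\Gamma^2}$. Then $$\nabla_aA+\frac{1}{2\Gamma}\Big(\nabla_a-\frac{K_a+\nabla_a\Gamma}{\Gamma}\Big)(K^b\nabla_b\Gamma)-\Big(\nabla^b-\frac{K^b}{\Gamma}\Big)\nabla_{(a}K_{b)}+\Big(\nabla_a+\frac{K_a-\nabla_a\Gamma}{2\Gamma}\Big)\nabla_cK^c=0.$$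
   Context: $\nabla$ is the Levi-Civita connection of $g$, $R_{ab}$ its Ricci tensor, $|\cdot|$ the $g$-norm. *)

theory Defs
  imports "HOL-Analysis.Analysis"
begin

text \<open>Local-coordinate formalization: the manifold is replaced by an open chart domain
U in real^'n, tensors are given by their components in the coordinate frame.
Lower-index (covector) fields are maps U -> real^'n, metrics are maps U -> real^'n^'n.\<close>

definition pd :: "'n::finite \<Rightarrow> (real^'n \<Rightarrow> real) \<Rightarrow> real^'n \<Rightarrow> real" where
  "pd i f x = deriv (\<lambda>t. f (x + t *\<^sub>R axis i 1)) 0"

definition pds :: "'n::finite list \<Rightarrow> (real^'n \<Rightarrow> real) \<Rightarrow> real^'n \<Rightarrow> real" where
  "pds is f = foldr pd is f"

definition smooth_on :: "(real^'n::finite) set \<Rightarrow> (real^'n \<Rightarrow> real) \<Rightarrow> bool" where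
  "smooth_on U f \<longleftrightarrow> (\<forall>is. \<forall>x\<in>U. pds is f differentiable (at x))"

definition ginv :: "(real^'n \<Rightarrow> real^'n^'n) \<Rightarrow> real^'n \<Rightarrow> real^'n^'n::finite" where
  "ginv g x = matrix_inv (g x)"

text \<open>Christoffel symbols of the Levi-Civita connection, chr g k i j = Gamma^k_{ij}.\<close>
definition chr :: "(real^'n \<Rightarrow> real^'n^'n) \<Rightarrow> 'n::finite \<Rightarrow> 'n \<Rightarrow> 'n \<Rightarrow> real^'n \<Rightarrow> real" where
  "chr g k i j x = (1/2) * (\<Sum>l\<in>UNIV. ginv g x $ k $ l *
      (pd i (\<lambda>y. g y $ j $ l) x + pd j (\<lambda>y. g y $ i $ l) x - pd l (\<lambda>y. g y $ i $ j) x))"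

definition cov1 :: "(real^'n \<Rightarrow> real^'n^'n) \<Rightarrow> (real^'n \<Rightarrow> real^'n) \<Rightarrow> 'n::finite \<Rightarrow> 'n \<Rightarrow> real^'n \<Rightarrow> real" where
  "cov1 g w i j x = pd i (\<lambda>y. w y $ j) x - (\<Sum>k\<in>UNIV. chr g k i j x * w x $ k)"

definition cov2 :: "(real^'n \<Rightarrow> real^'n^'n) \<Rightarrow> (real^'n \<Rightarrow> 'n \<Rightarrow> 'n \<Rightarrow> real) \<Rightarrow> 'n::finite \<Rightarrow> 'n \<Rightarrow> 'n \<Rightarrow> real^'n \<Rightarrow> real" where
  "cov2 g T c a b x = pd c (\<lambda>y. T y a b) x
      - (\<Sum>k\<in>UNIV. chr g k c a x * T x k b) - (\<Sum>k\<in>UNIV. chr g k c b x * T x a k)"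

definition ricci :: "(real^'n \<Rightarrow> real^'n^'n) \<Rightarrow> 'n::finite \<Rightarrow> 'n \<Rightarrow> real^'n \<Rightarrow> real" where
  "ricci g i j x = (\<Sum>k\<in>UNIV. pd k (\<lambda>y. chr g k i j y) x - pd j (\<lambda>y. chr g k i k y) x)
      + (\<Sum>k\<in>UNIV. \<Sum>l\<in>UNIV. chr g k k l x * chr g l i j x - chr g k j l x * chr g l i k x)"

definition raise :: "(real^'n \<Rightarrow> real^'n^'n) \<Rightarrow> (real^'n \<Rightarrow> real^'n) \<Rightarrow> real^'n \<Rightarrow> real^'n::finite" where
  "raise g w x = ginv g x *v w x"

definition symcov :: "(real^'n \<Rightarrow> real^'n^'n) \<Rightarrow> (real^'n \<Rightarrow> real^'n) \<Rightarrow> 'n::finite \<Rightarrow> 'n \<Rightarrow> real^'n \<Rightarrow> real" where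
  "symcov g w a b x = (cov1 g w a b x + cov1 g w b a x) / 2"

definition div1 :: "(real^'n \<Rightarrow> real^'n^'n) \<Rightarrow> (real^'n \<Rightarrow> real^'n) \<Rightarrow> real^'n::finite \<Rightarrow> real" where
  "div1 g w x = (\<Sum>a\<in>UNIV. \<Sum>b\<in>UNIV. ginv g x $ a $ b * cov1 g w a b x)"

definition normsq :: "(real^'n \<Rightarrow> real^'n^'n) \<Rightarrow> (real^'n \<Rightarrow> real^'n) \<Rightarrow> real^'n::finite \<Rightarrow> real" where
  "normsq g w x = (\<Sum>a\<in>UNIV. \<Sum>b\<in>UNIV. ginv g x $ a $ b * w x $ a * w x $ b)"

definition Kf :: "(real^'n \<Rightarrow> real^'n) \<Rightarrow> (real^'n \<Rightarrow> real) \<Rightarrow> real^'n \<Rightarrow> real^'n::finite" where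
  "Kf X Gam x = (\<chi> a. Gam x * X x $ a + pd a Gam x)"

definition Ff :: "(real^'n \<Rightarrow> real^'n^'n) \<Rightarrow> (real^'n \<Rightarrow> real^'n) \<Rightarrow> real \<Rightarrow> real^'n::finite \<Rightarrow> real" where
  "Ff g X lam x = normsq g X x / 2 - div1 g X x / 2 + lam"

text \<open>A defined by F = A/Gamma + |K|^2/Gamma^2\<close>
definition Af :: "(real^'n \<Rightarrow> real^'n^'n) \<Rightarrow> (real^'n \<Rightarrow> real^'n) \<Rightarrow> (real^'n \<Rightarrow> real) \<Rightarrow> real \<Rightarrow> real^'n::finite \<Rightarrow> real" where
  "Af g X Gam lam x = Gam x * (Ff g X lam x - normsq g (Kf X Gam) x / (Gam x)^2)"

end

theory Submission
  imports Defs
begin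


lemma line_has_derivative:
  assumes "(f has_derivative F) (at x)"
  shows "((\<lambda>t. f (x + t *\<^sub>R v)) has_real_derivative F v) (at 0)"
proof -
  have l: "((\<lambda>t::real. x + t *\<^sub>R v) has_derivative (\<lambda>t. t *\<^sub>R v)) (at 0)"
    by (auto intro!: derivative_eq_intros)
  have "((\<lambda>t. f (x + t *\<^sub>R v)) has_derivative (\<lambda>t. F (t *\<^sub>R v))) (at 0)"
    using has_derivative_compose[OF l] assms by simp
  moreover have "(\<lambda>t. F (t *\<^sub>R v)) = (*) (F v)"
    using linear_simps(5)[OF has_derivative_bounded_linear[OF assms]] by (auto simp: fun_eq_iff)
  ultimately show ?thesis by (simp add: has_field_derivative_def)
qed

lemma pd_eq: "(f has_derivative F) (at x) \<Longrightarrow> pd i f x = F (axis i 1)"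
  unfolding pd_def by (rule DERIV_imp_deriv[OF line_has_derivative])

lemma pd_frechet: "f differentiable (at x) \<Longrightarrow> pd i f x = frechet_derivative f (at x) (axis i 1)"
  by (rule pd_eq) (simp add: frechet_derivative_works[symmetric])

lemma pd_add: "f differentiable (at x) \<Longrightarrow> h differentiable (at x) \<Longrightarrow>
   pd i (\<lambda>y. f y + h y) x = pd i f x + pd i h x"
  unfolding frechet_derivative_works
  by (subst pd_eq[OF has_derivative_add], assumption+) (simp add: pd_frechet frechet_derivative_works[symmetric])

lemma pd_diff: "f differentiable (at x) \<Longrightarrow> h differentiable (at x) \<Longrightarrow>
   pd i (\<lambda>y. f y - h y) x = pd i f x - pd i h x"
  unfolding frechet_derivative_works
  by (subst pd_eq[OF has_derivative_diff], assumption+) (simp add: pd_frechet frechet_derivative_works[symmetric])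

lemma pd_mult: "f differentiable (at x) \<Longrightarrow> h differentiable (at x) \<Longrightarrow>
   pd i (\<lambda>y. f y * h y) x = pd i f x * h x + f x * pd i h x"
  unfolding frechet_derivative_works
  by (subst pd_eq[OF has_derivative_mult], assumption+) (simp add: pd_frechet frechet_derivative_works[symmetric])

lemma pd_const: "pd i (\<lambda>y. c) x = 0"
  by (subst pd_eq[of _ "\<lambda>_. 0"]) (auto intro: derivative_eq_intros)

lemma pd_inverse: assumes "f differentiable (at x)" "f x \<noteq> 0" shows
   "pd i (\<lambda>y. inverse (f y)) x = - (pd i f x / (f x)^2)"
proof -
  have d: "(f has_derivative frechet_derivative f (at x)) (at x)" using assms(1) frechet_derivative_works by blast
  show ?thesis
    by (subst pd_eq[OF Deriv.has_derivative_inverse[OF assms(2) d]]) (simp add: pd_eq[OF d] power2_eq_square field_simps)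
qed

lemma pd_sum: "finite A \<Longrightarrow> (\<And>k. k \<in> A \<Longrightarrow> F k differentiable (at x)) \<Longrightarrow>
   pd i (\<lambda>y. \<Sum>k\<in>A. F k y) x = (\<Sum>k\<in>A. pd i (F k) x)"
proof (induction A rule: finite_induct)
  case empty then show ?case by (simp add: pd_const)
next
  case (insert a A)
  have d: "(\<lambda>y. \<Sum>k\<in>A. F k y) differentiable (at x)"
    using insert by (intro differentiable_sum) auto
  show ?case using insert
    by (simp add: pd_add[OF _ d])
qed

lemma pd_cong:
  assumes "open U" "x \<in> U" "\<And>y. y \<in> U \<Longrightarrow> f y = h y"
  shows "pd i f x = pd i h x"
proof -
  obtain e where e: "e > 0" "ball x e \<subseteq> U" using assms openE by blast
  have "\<forall>\<^sub>F t in nhds 0. f (x + t *\<^sub>R axis i 1) = h (x + t *\<^sub>R axis i 1)"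
    unfolding eventually_nhds_metric
  proof (intro exI[of _ e] conjI allI impI)
    fix t :: real assume "dist t 0 < e"
    then have "x + t *\<^sub>R axis i 1 \<in> ball x e"
      by (simp add: dist_norm)
    then show "f (x + t *\<^sub>R axis i 1) = h (x + t *\<^sub>R axis i 1)" using e assms(3) by auto
  qed (use e in auto)
  then show ?thesis unfolding pd_def by (rule deriv_cong_ev) simp
qed

lemma differentiable_cong:
  assumes "open U" "x \<in> U" "\<And>y. y \<in> U \<Longrightarrow> f y = h y" "f differentiable (at x)"
  shows "h differentiable (at x)"
  using assms has_derivative_transform_within_open unfolding differentiable_def by blast



definition smn :: "(real^'n::finite) set \<Rightarrow> nat \<Rightarrow> (real^'n \<Rightarrow> real) \<Rightarrow> bool" where
  "smn U n f \<longleftrightarrow> (\<forall>is. length is \<le> n \<longrightarrow> (\<forall>x\<in>U. pds is f differentiable (at x)))"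

lemma pds_Nil[simp]: "pds [] f = f" by (simp add: pds_def)
lemma pds_Cons[simp]: "pds (i#is) f = pd i (pds is f)" by (simp add: pds_def)
lemma pds_snoc: "pds (is @ [j]) f = pds is (pd j f)" by (simp add: pds_def)

lemma smooth_on_smn: "smooth_on U f \<longleftrightarrow> (\<forall>n. smn U n f)"
  unfolding smooth_on_def smn_def by auto

lemma smn_0: "smn U 0 f \<longleftrightarrow> (\<forall>x\<in>U. f differentiable (at x))"
  unfolding smn_def by auto

lemma smn_mono: "smn U n f \<Longrightarrow> m \<le> n \<Longrightarrow> smn U m f"
  unfolding smn_def by auto

lemma smn_diffble: "smn U n f \<Longrightarrow> x \<in> U \<Longrightarrow> f differentiable (at x)"
  unfolding smn_def by (drule spec[of _ "[]"]) simp

lemma smn_pd: "smn U (Suc n) f \<Longrightarrow> smn U n (pd j f)"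
  unfolding smn_def
proof (intro allI impI)
  fix "is" :: "'a list" assume a: "\<forall>is. length is \<le> Suc n \<longrightarrow> (\<forall>x\<in>U. pds is f differentiable at x)" "length is \<le> n"
  show "\<forall>x\<in>U. pds is (pd j f) differentiable at x"
    using a(1)[rule_format, of "is @ [j]"] a(2) by (simp add: pds_snoc)
qed

lemma pds_cong: "open U \<Longrightarrow> (\<And>y. y \<in> U \<Longrightarrow> f y = h y) \<Longrightarrow> y \<in> U \<Longrightarrow> pds is f y = pds is h y"
proof (induction "is" arbitrary: y)
  case Nil then show ?case by simp
next
  case (Cons i "is") then show ?case by (simp add: pd_cong[of U y "pds is f" "pds is h"])
qed

lemma smn_SucI:
  assumes U: "open U" and 0: "smn U 0 f"
    and h: "\<And>j. \<exists>h. smn U n h \<and> (\<forall>y\<in>U. pd j f y = h y)"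
  shows "smn U (Suc n) f"
  unfolding smn_def
proof (intro allI impI ballI)
  fix "is" :: "'a list" and x assume l: "length is \<le> Suc n" and x: "x \<in> U"
  show "pds is f differentiable (at x)"
  proof (cases "is" rule: rev_exhaust)
    case Nil then show ?thesis using 0 x by (simp add: smn_0)
  next
    case (snoc is' j)
    obtain hh where hh: "smn U n hh" "\<forall>y\<in>U. pd j f y = hh y" using h by blast
    have "pds is' hh differentiable (at x)" using hh(1) l x snoc unfolding smn_def by auto
    moreover have "\<And>y. y \<in> U \<Longrightarrow> pds is' hh y = pds is' (pd j f) y"
      using pds_cong[OF U, of hh "pd j f"] hh(2) by auto
    ultimately have "pds is' (pd j f) differentiable (at x)"
      using differentiable_cong[OF U x, of "pds is' hh" "pds is' (pd j f)"] by blast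
    then show ?thesis using snoc by (simp add: pds_snoc)
  qed
qed

lemma smn_pd_cong:
  assumes "open U" "smn U n f" "\<And>y. y \<in> U \<Longrightarrow> f y = h y" shows "smn U n h"
  unfolding smn_def
proof (intro allI impI ballI)
  fix "is" :: "'a list" and x assume l: "length is \<le> n" and x: "x \<in> U"
  have "pds is f differentiable (at x)" using assms(2) l x unfolding smn_def by blast
  moreover have "\<And>y. y \<in> U \<Longrightarrow> pds is f y = pds is h y" using pds_cong[OF assms(1), of f h] assms(3) by blast
  ultimately show "pds is h differentiable (at x)" using differentiable_cong[OF assms(1) x] by blast
qed

lemma smn_const: "open U \<Longrightarrow> smn U n (\<lambda>y. c)"
proof (induction n arbitrary: c)
  case 0 then show ?case by (simp add: smn_0)
next
  case (Suc n) show ?case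
  proof (rule smn_SucI[OF Suc.prems])
    show "smn U 0 (\<lambda>y. c)" by (simp add: smn_0)
    fix j show "\<exists>h. smn U n h \<and> (\<forall>y\<in>U. pd j (\<lambda>y. c) y = h y)"
      using Suc.IH[OF Suc.prems, of 0] by (intro exI[of _ "\<lambda>_. 0"]) (simp add: pd_const)
  qed
qed

lemma smn_add: "open U \<Longrightarrow> smn U n f \<Longrightarrow> smn U n h \<Longrightarrow> smn U n (\<lambda>y. f y + h y)"
proof (induction n arbitrary: f h)
  case 0 then show ?case unfolding smn_0 by (blast intro: differentiable_add)
next
  case (Suc n)
  show ?case
  proof (rule smn_SucI[OF Suc.prems(1)])
    show "smn U 0 (\<lambda>y. f y + h y)" using Suc.prems unfolding smn_0 by (blast intro: differentiable_add smn_diffble)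
    fix j
    have "smn U n (\<lambda>y. pd j f y + pd j h y)" using Suc.prems by (intro Suc.IH smn_pd)
    moreover have "\<forall>y\<in>U. pd j (\<lambda>y. f y + h y) y = pd j f y + pd j h y"
      using Suc.prems by (blast intro: pd_add smn_diffble)
    ultimately show "\<exists>k. smn U n k \<and> (\<forall>y\<in>U. pd j (\<lambda>y. f y + h y) y = k y)" by blast
  qed
qed

lemma smn_mult: "open U \<Longrightarrow> smn U n f \<Longrightarrow> smn U n h \<Longrightarrow> smn U n (\<lambda>y. f y * h y)"
proof (induction n arbitrary: f h)
  case 0 then show ?case unfolding smn_0 by (blast intro: differentiable_mult)
next
  case (Suc n)
  show ?case
  proof (rule smn_SucI[OF Suc.prems(1)])
    show "smn U 0 (\<lambda>y. f y * h y)" using Suc.prems unfolding smn_0 by (blast intro: differentiable_mult smn_diffble)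
    fix j
    have m: "smn U n f" "smn U n h" using Suc.prems smn_mono[of U "Suc n" _ n] by auto+
    have "smn U n (\<lambda>y. pd j f y * h y + f y * pd j h y)"
      using Suc.prems m by (intro smn_add Suc.IH smn_pd)
    moreover have "\<forall>y\<in>U. pd j (\<lambda>y. f y * h y) y = pd j f y * h y + f y * pd j h y"
      using Suc.prems by (blast intro: pd_mult smn_diffble)
    ultimately show "\<exists>k. smn U n k \<and> (\<forall>y\<in>U. pd j (\<lambda>y. f y * h y) y = k y)" by blast
  qed
qed

lemma smn_scale: "open U \<Longrightarrow> smn U n f \<Longrightarrow> smn U n (\<lambda>y. c * f y)"
  using smn_mult[of U n "\<lambda>_. c" f] smn_const by blast

lemma smn_inverse: "open U \<Longrightarrow> smn U n f \<Longrightarrow> (\<forall>y\<in>U. f y \<noteq> 0) \<Longrightarrow> smn U n (\<lambda>y. inverse (f y))"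
proof (induction n arbitrary: f)
  case 0 then show ?case unfolding smn_0 by (blast intro: differentiable_inverse)
next
  case (Suc n)
  show ?case
  proof (rule smn_SucI[OF Suc.prems(1)])
    show "smn U 0 (\<lambda>y. inverse (f y))" using Suc.prems unfolding smn_0 by (blast intro: differentiable_inverse smn_diffble)
    fix j
    have m: "smn U n f" using Suc.prems smn_mono[of U "Suc n" _ n] by auto
    have i: "smn U n (\<lambda>y. inverse (f y))" using Suc.prems m by (intro Suc.IH)
    have "smn U n (\<lambda>y. (-1) * (pd j f y * (inverse (f y) * inverse (f y))))"
      using Suc.prems i by (intro smn_scale smn_mult smn_pd)
    moreover have "\<forall>y\<in>U. pd j (\<lambda>y. inverse (f y)) y = (-1) * (pd j f y * (inverse (f y) * inverse (f y)))"
    proof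
      fix y assume y: "y \<in> U"
      have "pd j (\<lambda>y. inverse (f y)) y = - (pd j f y / (f y)^2)"
        using Suc.prems y by (intro pd_inverse smn_diffble) auto
      then show "pd j (\<lambda>y. inverse (f y)) y = (-1) * (pd j f y * (inverse (f y) * inverse (f y)))"
        by (simp add: power2_eq_square divide_inverse)
    qed
    ultimately show "\<exists>k. smn U n k \<and> (\<forall>y\<in>U. pd j (\<lambda>y. inverse (f y)) y = k y)" by blast
  qed
qed

lemma smn_sum: assumes U: "open U" shows "finite A \<Longrightarrow> (\<And>k. k \<in> A \<Longrightarrow> smn U n (F k)) \<Longrightarrow> smn U n (\<lambda>y. \<Sum>k\<in>A. F k y)"
  by (induction A rule: finite_induct) (auto simp: smn_const[OF U] smn_add[OF U])

lemma smn_prod: assumes U: "open U" shows "finite A \<Longrightarrow> (\<And>k. k \<in> A \<Longrightarrow> smn U n (F k)) \<Longrightarrow> smn U n (\<lambda>y. \<Prod>k\<in>A. F k y)"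
  by (induction A rule: finite_induct) (auto simp: smn_const[OF U] smn_mult[OF U])

definition sm :: "(real^'n::finite) set \<Rightarrow> (real^'n \<Rightarrow> real) \<Rightarrow> bool" where
  "sm U f \<longleftrightarrow> (\<forall>n. smn U n f)"

lemma sm_smooth_on: "sm U f = smooth_on U f" by (simp add: sm_def smooth_on_smn)

lemma sm_const[simp, intro]: "open U \<Longrightarrow> sm U (\<lambda>y. c)" by (simp add: sm_def smn_const)
lemma sm_add[intro]: "open U \<Longrightarrow> sm U f \<Longrightarrow> sm U h \<Longrightarrow> sm U (\<lambda>y. f y + h y)" by (simp add: sm_def smn_add)
lemma sm_mult[intro]: "open U \<Longrightarrow> sm U f \<Longrightarrow> sm U h \<Longrightarrow> sm U (\<lambda>y. f y * h y)" by (simp add: sm_def smn_mult)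
lemma sm_uminus[intro]: "open U \<Longrightarrow> sm U f \<Longrightarrow> sm U (\<lambda>y. - f y)"
  using sm_mult[of U "\<lambda>_. -1" f] by simp
lemma sm_diff[intro]: "open U \<Longrightarrow> sm U f \<Longrightarrow> sm U h \<Longrightarrow> sm U (\<lambda>y. f y - h y)"
  using sm_add[of U f "\<lambda>y. - h y"] sm_uminus[of U h] by simp
lemma sm_inverse[intro]: "open U \<Longrightarrow> sm U f \<Longrightarrow> (\<forall>y\<in>U. f y \<noteq> 0) \<Longrightarrow> sm U (\<lambda>y. inverse (f y))"
  by (simp add: sm_def smn_inverse)
lemma sm_divide[intro]: "open U \<Longrightarrow> sm U f \<Longrightarrow> sm U h \<Longrightarrow> (\<forall>y\<in>U. h y \<noteq> 0) \<Longrightarrow> sm U (\<lambda>y. f y / h y)"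
  using sm_mult[of U f "\<lambda>y. inverse (h y)"] sm_inverse[of U h] by (simp add: divide_inverse)
lemma sm_sum[intro]: "open U \<Longrightarrow> (\<And>k. k \<in> A \<Longrightarrow> sm U (F k)) \<Longrightarrow> sm U (\<lambda>y. \<Sum>k\<in>A. F k y)"
  by (cases "finite A") (auto simp: sm_def smn_sum smn_const)
lemma sm_prod[intro]: "open U \<Longrightarrow> finite A \<Longrightarrow> (\<And>k. k \<in> A \<Longrightarrow> sm U (F k)) \<Longrightarrow> sm U (\<lambda>y. \<Prod>k\<in>A. F k y)"
  by (auto simp: sm_def smn_prod)
lemma sm_pd[intro]: "sm U f \<Longrightarrow> sm U (pd j f)" by (simp add: sm_def smn_pd)
lemma sm_diffble: "sm U f \<Longrightarrow> x \<in> U \<Longrightarrow> f differentiable (at x)"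
  by (auto simp: sm_def intro: smn_diffble)
lemma sm_cong: "open U \<Longrightarrow> sm U f \<Longrightarrow> (\<And>y. y \<in> U \<Longrightarrow> f y = h y) \<Longrightarrow> sm U h"
  unfolding sm_def using smn_pd_cong by metis



lemma line_deriv:
  assumes "(f has_derivative F) (at (x + s0 *\<^sub>R v))"
  shows "((\<lambda>s. f (x + s *\<^sub>R v)) has_real_derivative F v) (at s0)"
proof -
  have l: "((\<lambda>s::real. x + s *\<^sub>R v) has_derivative (\<lambda>t. t *\<^sub>R v)) (at s0)"
    by (auto intro!: derivative_eq_intros)
  have "((\<lambda>s. f (x + s *\<^sub>R v)) has_derivative (\<lambda>t. F (t *\<^sub>R v))) (at s0)"
    using has_derivative_compose[OF l assms] by simp
  moreover have "(\<lambda>t. F (t *\<^sub>R v)) = (*) (F v)"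
    using linear_simps(5)[OF has_derivative_bounded_linear[OF assms]] by (auto simp: fun_eq_iff)
  ultimately show ?thesis by (simp add: has_field_derivative_def)
qed

lemma line_deriv_pd:
  assumes "f differentiable (at (x + s0 *\<^sub>R axis i 1))"
  shows "((\<lambda>s. f (x + s *\<^sub>R axis i 1)) has_real_derivative pd i f (x + s0 *\<^sub>R axis i 1)) (at s0)"
  using line_deriv[of f "frechet_derivative f (at (x + s0 *\<^sub>R axis i 1))" x s0 "axis i 1"] assms
  by (simp add: pd_frechet frechet_derivative_works[symmetric])

lemma schwarz_half:
  fixes f :: "real^'n::finite \<Rightarrow> real"
  assumes U: "open U" and x: "x \<in> U"
    and df: "\<And>y. y \<in> U \<Longrightarrow> f differentiable (at y)"
    and dfi: "\<And>y. y \<in> U \<Longrightarrow> pd i f differentiable (at y)"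
    and e: "e > 0"
  shows "\<exists>t0>0. \<forall>t. 0 < t \<and> t < t0 \<longrightarrow>
     \<bar>(f (x + t *\<^sub>R axis j 1 + t *\<^sub>R axis i 1) - f (x + t *\<^sub>R axis i 1) - f (x + t *\<^sub>R axis j 1) + f x)
        - t^2 * pd j (pd i f) x\<bar> \<le> 3 * e * t^2"
proof -
  obtain r where r: "r > 0" "ball x r \<subseteq> U" using U x openE by blast
  define Fi where "Fi = frechet_derivative (pd i f) (at x)"
  have hFi: "(pd i f has_derivative Fi) (at x)" using dfi[OF x] Fi_def frechet_derivative_works by blast
  have lin: "linear Fi" using has_derivative_bounded_linear[OF hFi] bounded_linear.linear by blast
  have pdx: "pd j (pd i f) x = Fi (axis j 1)" using pd_eq[OF hFi] .
  obtain d where d: "d > 0" "\<And>y. norm (y - x) < d \<Longrightarrow> \<bar>pd i f y - pd i f x - Fi (y - x)\<bar> \<le> e * norm (y - x)"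
    using hFi e unfolding has_derivative_at_alt by (metis real_norm_def)
  define t0 where "t0 = min r d / 3"
  have t0: "t0 > 0" using r d by (simp add: t0_def)
  show ?thesis
  proof (intro exI[of _ t0] conjI allI impI t0)
    fix t :: real assume t: "0 < t \<and> t < t0"
    let ?ei = "axis i 1 :: real^'n" and ?ej = "axis j 1 :: real^'n"
    have inU: "x + a *\<^sub>R ?ej + b *\<^sub>R ?ei \<in> U" if "\<bar>a\<bar> \<le> t" "\<bar>b\<bar> \<le> t" for a b
    proof -
      have "norm (a *\<^sub>R ?ej + b *\<^sub>R ?ei) \<le> \<bar>a\<bar> + \<bar>b\<bar>"
        using norm_triangle_ineq[of "a *\<^sub>R ?ej" "b *\<^sub>R ?ei"] by simp
      also have "\<dots> < r" using that t r unfolding t0_def by linarith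
      finally have n: "norm (a *\<^sub>R ?ej + b *\<^sub>R ?ei) < r" .
      have "dist x (x + (a *\<^sub>R ?ej + b *\<^sub>R ?ei)) = norm (a *\<^sub>R ?ej + b *\<^sub>R ?ei)"
        by (metis add_diff_cancel_left' dist_norm norm_minus_commute)
      then have "x + (a *\<^sub>R ?ej + b *\<^sub>R ?ei) \<in> ball x r" using n by simp
      then show ?thesis using r(2) by (auto simp: add.assoc)
    qed
    define \<phi> where "\<phi> s = f (x + t *\<^sub>R ?ej + s *\<^sub>R ?ei) - f (x + s *\<^sub>R ?ei)" for s
    have der: "(\<phi> has_real_derivative (pd i f (x + t *\<^sub>R ?ej + s *\<^sub>R ?ei) - pd i f (x + s *\<^sub>R ?ei))) (at s)"
      if "0 \<le> s" "s \<le> t" for s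
    proof -
      have a: "x + t *\<^sub>R ?ej + s *\<^sub>R ?ei \<in> U" using inU that t by auto
      have b: "x + s *\<^sub>R ?ei \<in> U" using inU[of 0 s] that t by auto
      show ?thesis unfolding \<phi>_def
        by (intro DERIV_diff line_deriv_pd[of f "x + t *\<^sub>R ?ej" s i, simplified] line_deriv_pd df a b)
    qed
    obtain \<xi> where xi: "0 < \<xi>" "\<xi> < t" "\<phi> t - \<phi> 0 = (t - 0) * (pd i f (x + t *\<^sub>R ?ej + \<xi> *\<^sub>R ?ei) - pd i f (x + \<xi> *\<^sub>R ?ei))"
      using MVT2[of 0 t \<phi>, OF _ der] t by auto
    define A where "A = x + t *\<^sub>R ?ej + \<xi> *\<^sub>R ?ei"
    define B where "B = x + \<xi> *\<^sub>R ?ei"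
    have nA: "norm (A - x) \<le> 2 * t"
    proof -
      have "norm (A - x) \<le> norm (t *\<^sub>R ?ej) + norm (\<xi> *\<^sub>R ?ei)"
        unfolding A_def by (metis add_diff_cancel_left' add.assoc norm_triangle_ineq)
      then show ?thesis using xi t by simp
    qed
    have nB: "norm (B - x) \<le> t" unfolding B_def using xi by simp
    have dA: "norm (A - x) < d" and dB: "norm (B - x) < d" using nA nB t unfolding t0_def by auto
    have eA: "\<bar>pd i f A - pd i f x - Fi (A - x)\<bar> \<le> e * (2 * t)"
    proof -
      have "\<bar>pd i f A - pd i f x - Fi (A - x)\<bar> \<le> e * norm (A - x)" by (rule d(2)[OF dA])
      also have "\<dots> \<le> e * (2 * t)" using nA e by (intro mult_left_mono) auto
      finally show ?thesis .
    qed
    have eB: "\<bar>pd i f B - pd i f x - Fi (B - x)\<bar> \<le> e * t"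
    proof -
      have "\<bar>pd i f B - pd i f x - Fi (B - x)\<bar> \<le> e * norm (B - x)" by (rule d(2)[OF dB])
      also have "\<dots> \<le> e * t" using nB e by (intro mult_left_mono) auto
      finally show ?thesis .
    qed
    have "Fi (A - x) - Fi (B - x) = Fi (A - B)" using linear_diff[OF lin] by simp
    also have "A - B = t *\<^sub>R ?ej" unfolding A_def B_def by simp
    finally have FAB: "Fi (A - x) - Fi (B - x) = t * Fi ?ej" using linear_cmul[OF lin] by simp
    have "\<bar>(pd i f A - pd i f B) - t * Fi ?ej\<bar> \<le> 3 * e * t"
      using eA eB FAB unfolding abs_le_iff by linarith
    moreover have "\<phi> t - \<phi> 0 = t * (pd i f A - pd i f B)" using xi(3) unfolding A_def B_def by simp
    ultimately have "\<bar>(\<phi> t - \<phi> 0) - t^2 * Fi ?ej\<bar> \<le> 3 * e * t^2"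
    proof -
      assume h1: "\<bar>(pd i f A - pd i f B) - t * Fi ?ej\<bar> \<le> 3 * e * t" and h2: "\<phi> t - \<phi> 0 = t * (pd i f A - pd i f B)"
      have "\<bar>(\<phi> t - \<phi> 0) - t^2 * Fi ?ej\<bar> = t * \<bar>(pd i f A - pd i f B) - t * Fi ?ej\<bar>"
      proof -
        have "(\<phi> t - \<phi> 0) - t^2 * Fi ?ej = t * ((pd i f A - pd i f B) - t * Fi ?ej)"
          using h2 by (simp add: power2_eq_square algebra_simps)
        then show ?thesis using t by (simp add: abs_mult)
      qed
      also have "\<dots> \<le> t * (3 * e * t)" using h1 t by (intro mult_left_mono) auto
      finally show ?thesis by (simp add: power2_eq_square mult_ac)
    qed
    then show "\<bar>(f (x + t *\<^sub>R ?ej + t *\<^sub>R ?ei) - f (x + t *\<^sub>R ?ei) - f (x + t *\<^sub>R ?ej) + f x)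
        - t^2 * pd j (pd i f) x\<bar> \<le> 3 * e * t^2"
      unfolding pdx \<phi>_def by (simp add: algebra_simps)
  qed
qed

lemma schwarz:
  fixes f :: "real^'n::finite \<Rightarrow> real"
  assumes U: "open U" and x: "x \<in> U"
    and df: "\<And>y. y \<in> U \<Longrightarrow> f differentiable (at y)"
    and dfi: "\<And>y. y \<in> U \<Longrightarrow> pd i f differentiable (at y)"
    and dfj: "\<And>y. y \<in> U \<Longrightarrow> pd j f differentiable (at y)"
  shows "pd j (pd i f) x = pd i (pd j f) x"
proof (rule ccontr)
  assume ne: "pd j (pd i f) x \<noteq> pd i (pd j f) x"
  define e where "e = \<bar>pd j (pd i f) x - pd i (pd j f) x\<bar> / 12"
  have e: "e > 0" using ne by (simp add: e_def)
  obtain t1 where t1: "t1 > 0" "\<forall>t. 0 < t \<and> t < t1 \<longrightarrow>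
     \<bar>(f (x + t *\<^sub>R axis j 1 + t *\<^sub>R axis i 1) - f (x + t *\<^sub>R axis i 1) - f (x + t *\<^sub>R axis j 1) + f x)
        - t^2 * pd j (pd i f) x\<bar> \<le> 3 * e * t^2"
    using schwarz_half[OF U x df dfi e, of j] by blast
  obtain t2 where t2: "t2 > 0" "\<forall>t. 0 < t \<and> t < t2 \<longrightarrow>
     \<bar>(f (x + t *\<^sub>R axis i 1 + t *\<^sub>R axis j 1) - f (x + t *\<^sub>R axis j 1) - f (x + t *\<^sub>R axis i 1) + f x)
        - t^2 * pd i (pd j f) x\<bar> \<le> 3 * e * t^2"
    using schwarz_half[OF U x df dfj e, of i] by blast
  define t where "t = min t1 t2 / 2"
  have t: "0 < t" "t < t1" "t < t2" using t1 t2 by (auto simp: t_def)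
  define D where "D = f (x + t *\<^sub>R axis j 1 + t *\<^sub>R axis i 1) - f (x + t *\<^sub>R axis i 1) - f (x + t *\<^sub>R axis j 1) + f x"
  have D2: "f (x + t *\<^sub>R axis i 1 + t *\<^sub>R axis j 1) - f (x + t *\<^sub>R axis j 1) - f (x + t *\<^sub>R axis i 1) + f x = D"
    unfolding D_def by (simp add: algebra_simps)
  have a: "\<bar>D - t^2 * pd j (pd i f) x\<bar> \<le> 3 * e * t^2" using t1(2) t unfolding D_def by blast
  have b: "\<bar>D - t^2 * pd i (pd j f) x\<bar> \<le> 3 * e * t^2" using t2(2) t D2 by metis
  have "t^2 * \<bar>pd j (pd i f) x - pd i (pd j f) x\<bar> = \<bar>(D - t^2 * pd i (pd j f) x) - (D - t^2 * pd j (pd i f) x)\<bar>"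
  proof -
    have "t^2 * \<bar>pd j (pd i f) x - pd i (pd j f) x\<bar> = \<bar>t^2 * (pd j (pd i f) x - pd i (pd j f) x)\<bar>"
      by (simp add: abs_mult)
    then show ?thesis by (simp add: algebra_simps)
  qed
  also have "\<dots> \<le> 6 * e * t^2" using a b abs_triangle_ineq4[of "D - t^2 * pd i (pd j f) x" "D - t^2 * pd j (pd i f) x"] by linarith
  finally have "t^2 * (12 * e) \<le> t^2 * (6 * e)" unfolding e_def by (simp add: mult_ac)
  then show False using t e by (simp add: mult_le_cancel_left)
qed

lemma sm_schwarz: "open U \<Longrightarrow> x \<in> U \<Longrightarrow> sm U f \<Longrightarrow> pd j (pd i f) x = pd i (pd j f) x"
  by (rule schwarz) (auto intro: sm_diffble sm_pd)



locale metric =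
  fixes U :: "(real^'n::finite) set" and g :: "real^'n \<Rightarrow> real^'n^'n"
  assumes U_open: "open U"
    and g_sym: "\<forall>x\<in>U. \<forall>i j. g x $ i $ j = g x $ j $ i"
    and g_pos: "\<forall>x\<in>U. \<forall>v. v \<noteq> 0 \<longrightarrow> v \<bullet> (g x *v v) > 0"
    and g_smooth: "\<forall>i j. smooth_on U (\<lambda>x. g x $ i $ j)"
begin

lemma g_invertible: "x \<in> U \<Longrightarrow> invertible (g x)"
proof -
  assume x: "x \<in> U"
  have "\<forall>v. g x *v v = 0 \<longrightarrow> v = 0"
  proof (intro allI impI)
    fix v assume "g x *v v = 0"
    then have "v \<bullet> (g x *v v) = 0" by simp
    then show "v = 0" using g_pos x by force
  qed
  then show ?thesis unfolding invertible_left_inverse matrix_left_invertible_ker by blast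
qed

lemma ginv_right: "x \<in> U \<Longrightarrow> g x ** ginv g x = mat 1"
  and ginv_left: "x \<in> U \<Longrightarrow> ginv g x ** g x = mat 1"
  using someI_ex[OF g_invertible[unfolded invertible_def]]
  unfolding ginv_def matrix_inv_def by auto

lemma g_det_nz: "x \<in> U \<Longrightarrow> det (g x) \<noteq> 0"
  using g_invertible invertible_det_nz by blast

lemma gh: "x \<in> U \<Longrightarrow> (\<Sum>k\<in>UNIV. g x $ i $ k * ginv g x $ k $ j) = (if i = j then 1 else 0)"
  using ginv_right[of x] by (simp add: matrix_matrix_mult_def mat_def vec_eq_iff)

lemma hg: "x \<in> U \<Longrightarrow> (\<Sum>k\<in>UNIV. ginv g x $ i $ k * g x $ k $ j) = (if i = j then 1 else 0)"
  using ginv_left[of x] by (simp add: matrix_matrix_mult_def mat_def vec_eq_iff)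

lemma g_transpose: "x \<in> U \<Longrightarrow> transpose (g x) = g x"
  using g_sym by (simp add: transpose_def vec_eq_iff)

lemma ginv_sym: "x \<in> U \<Longrightarrow> ginv g x $ i $ j = ginv g x $ j $ i"
proof -
  assume x: "x \<in> U"
  let ?h = "ginv g x"
  have "transpose ?h ** g x = mat 1"
  proof -
    have "transpose (g x ** ?h) = mat 1" using ginv_right[OF x] by (simp add: transpose_mat)
    then show ?thesis using g_transpose[OF x] by (simp add: matrix_transpose_mul)
  qed
  then have "transpose ?h = transpose ?h ** (g x ** ?h)" using ginv_right[OF x] by simp
  also have "\<dots> = ?h" by (simp add: matrix_mul_assoc \<open>transpose ?h ** g x = mat 1\<close>)
  finally have "transpose ?h $ j $ i = ?h $ j $ i" by simp
  then show ?thesis by (simp add: transpose_def)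
qed

lemma ginv_cramer: "x \<in> U \<Longrightarrow>
  ginv g x $ k $ j = det (\<chi> r s. if s = k then axis j 1 $ r else g x $ r $ s) / det (g x)"
proof -
  assume x: "x \<in> U"
  let ?c = "(\<chi> k. ginv g x $ k $ j) :: real^'n"
  have "g x *v ?c = axis j 1"
    using gh[OF x] by (simp add: matrix_vector_mult_def vec_eq_iff axis_def)
  then have "?c = (\<chi> k. det(\<chi> i l. if l = k then (axis j 1 :: real^'n) $ i else g x $ i $ l) / det (g x))"
    using cramer[OF g_det_nz[OF x]] by blast
  then have "?c $ k = (\<chi> k. det(\<chi> i l. if l = k then (axis j 1 :: real^'n) $ i else g x $ i $ l) / det (g x)) $ k" by simp
  then show ?thesis by simp
qed

lemma sm_g: "sm U (\<lambda>x. g x $ i $ j)" using g_smooth by (simp add: sm_smooth_on)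

lemma sm_det: assumes "\<And>i j. sm U (\<lambda>x. M x $ i $ j)" shows "sm U (\<lambda>x. det (M x))"
  unfolding det_def using assms U_open
  by (intro sm_sum sm_mult sm_prod sm_const) auto

lemma sm_ginv: "sm U (\<lambda>x. ginv g x $ i $ j)"
proof (rule sm_cong[OF U_open])
  show "sm U (\<lambda>x. det (\<chi> r s. if s = i then axis j 1 $ r else g x $ r $ s) / det (g x))"
  proof (intro sm_divide U_open sm_det ballI)
    fix a b
    show "sm U (\<lambda>x. (\<chi> r s. if s = i then axis j 1 $ r else g x $ r $ s) $ a $ b)"
      by (cases "b = i") (simp_all add: U_open sm_g)
  qed (use g_det_nz sm_g in auto)
qed (simp add: ginv_cramer)

end



lemma mm_add_r: "(A + B) ** C = A ** C + B ** (C::real^'k^'m)"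
  by (simp add: matrix_matrix_mult_def vec_eq_iff sum.distrib ring_distribs)
lemma mm_add_l: "C ** (A + B) = C ** A + C ** (B::real^'k^'m)"
  by (simp add: matrix_add_ldistrib)
lemma mm_sub_r: "(A - B) ** C = A ** C - B ** (C::real^'k^'m)"
  by (simp add: matrix_matrix_mult_def vec_eq_iff sum_subtractf ring_distribs)
lemma mm_sub_l: "C ** (A - B) = C ** A - C ** (B::real^'k^'m)"
  by (simp add: matrix_matrix_mult_def vec_eq_iff sum_subtractf ring_distribs)
lemma mm_neg_r: "(- A) ** C = - (A ** (C::real^'k^'m))"
  by (simp add: matrix_matrix_mult_def vec_eq_iff sum_negf)
lemma mm_neg_l: "C ** (- A) = - (C ** (A::real^'k^'m))"
  by (simp add: matrix_matrix_mult_def vec_eq_iff sum_negf)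
lemma mm_zero_l: "(0::real^'k^'m) ** C = 0"
  by (simp add: matrix_matrix_mult_def vec_eq_iff)
lemma mm_zero_r: "C ** (0::real^'k^'m) = 0"
  by (simp add: matrix_matrix_mult_def vec_eq_iff)
lemma mm_scale_l: "(c *\<^sub>R A) ** C = c *\<^sub>R (A ** (C::real^'k^'m))"
  by (simp add: matrix_matrix_mult_def vec_eq_iff sum_distrib_left mult.assoc)
lemma mm_scale_r: "C ** (c *\<^sub>R A) = c *\<^sub>R (C ** (A::real^'k^'m))"
  by (simp add: matrix_matrix_mult_def vec_eq_iff sum_distrib_left mult_ac)
lemma tr_add: "transpose (A + B) = transpose A + transpose (B::real^'k^'m)"
  by (simp add: transpose_def vec_eq_iff)
lemma tr_diff: "transpose (A - B) = transpose A - transpose (B::real^'k^'m)"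
  by (simp add: transpose_def vec_eq_iff)
lemma tr_neg: "transpose (- A) = - transpose (A::real^'k^'m)"
  by (simp add: transpose_def vec_eq_iff)
lemma tr_zero: "transpose (0::real^'k^'m) = 0"
  by (simp add: transpose_def vec_eq_iff)

lemmas mm_simps = mm_add_r mm_add_l mm_sub_r mm_sub_l mm_neg_r mm_neg_l mm_zero_l mm_zero_r
  mm_scale_l mm_scale_r tr_add tr_diff tr_neg tr_zero matrix_transpose_mul matrix_mul_assoc transpose_transpose

definition dM :: "'n::finite \<Rightarrow> (real^'n \<Rightarrow> real^'m^'k) \<Rightarrow> real^'n \<Rightarrow> real^'m^'k" where
  "dM c A x = (\<chi> i j. pd c (\<lambda>y. A y $ i $ j) x)"

definition smM :: "(real^'n::finite) set \<Rightarrow> (real^'n \<Rightarrow> real^'m^'k) \<Rightarrow> bool" where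
  "smM U A \<longleftrightarrow> (\<forall>i j. sm U (\<lambda>y. A y $ i $ j))"

lemma smM_mult: "open U \<Longrightarrow> smM U A \<Longrightarrow> smM U B \<Longrightarrow> smM U (\<lambda>y. A y ** B y)"
  unfolding smM_def matrix_matrix_mult_def by (auto intro!: sm_sum sm_mult)
lemma smM_add: "open U \<Longrightarrow> smM U A \<Longrightarrow> smM U B \<Longrightarrow> smM U (\<lambda>y. A y + B y)"
  unfolding smM_def by (auto intro!: sm_add)
lemma smM_diff: "open U \<Longrightarrow> smM U A \<Longrightarrow> smM U B \<Longrightarrow> smM U (\<lambda>y. A y - B y)"
  unfolding smM_def by (auto intro!: sm_diff)
lemma smM_transpose: "smM U A \<Longrightarrow> smM U (\<lambda>y. transpose (A y))"
  unfolding smM_def transpose_def by auto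
lemma smM_dM: "smM U A \<Longrightarrow> smM U (dM c A)"
  unfolding smM_def dM_def by (auto intro!: sm_pd)

lemma dM_mult:
  assumes U: "open U" "x \<in> U" and A: "smM U A" and B: "smM U B"
  shows "dM c (\<lambda>y. A y ** B y) x = dM c A x ** B x + A x ** dM c B x"
proof -
  have dA: "\<And>i j. (\<lambda>y. A y $ i $ j) differentiable (at x)" using A U unfolding smM_def by (blast intro: sm_diffble)
  have dB: "\<And>i j. (\<lambda>y. B y $ i $ j) differentiable (at x)" using B U unfolding smM_def by (blast intro: sm_diffble)
  show ?thesis
    unfolding dM_def matrix_matrix_mult_def
    by (simp add: vec_eq_iff pd_sum pd_mult dA dB differentiable_mult sum.distrib)
qed

lemma dM_add:
  assumes U: "open U" "x \<in> U" and A: "smM U A" and B: "smM U B"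
  shows "dM c (\<lambda>y. A y + B y) x = dM c A x + dM c B x"
proof -
  have dA: "\<And>i j. (\<lambda>y. A y $ i $ j) differentiable (at x)" using A U unfolding smM_def by (blast intro: sm_diffble)
  have dB: "\<And>i j. (\<lambda>y. B y $ i $ j) differentiable (at x)" using B U unfolding smM_def by (blast intro: sm_diffble)
  show ?thesis unfolding dM_def by (simp add: vec_eq_iff pd_add dA dB)
qed

lemma dM_diff:
  assumes U: "open U" "x \<in> U" and A: "smM U A" and B: "smM U B"
  shows "dM c (\<lambda>y. A y - B y) x = dM c A x - dM c B x"
proof -
  have dA: "\<And>i j. (\<lambda>y. A y $ i $ j) differentiable (at x)" using A U unfolding smM_def by (blast intro: sm_diffble)
  have dB: "\<And>i j. (\<lambda>y. B y $ i $ j) differentiable (at x)" using B U unfolding smM_def by (blast intro: sm_diffble)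
  show ?thesis unfolding dM_def by (simp add: vec_eq_iff pd_diff dA dB)
qed

lemma dM_transpose: "dM c (\<lambda>y. transpose (A y)) x = transpose (dM c A x)"
  unfolding dM_def transpose_def by simp

lemma dM_const: "dM c (\<lambda>y. M) x = 0"
  unfolding dM_def by (simp add: vec_eq_iff pd_const)

lemma dM_cong: "open U \<Longrightarrow> x \<in> U \<Longrightarrow> (\<And>y. y \<in> U \<Longrightarrow> A y = B y) \<Longrightarrow> dM c A x = dM c B x"
proof -
  assume a: "open U" "x \<in> U" "\<And>y. y \<in> U \<Longrightarrow> A y = B y"
  have "\<And>i j. pd c (\<lambda>y. A y $ i $ j) x = pd c (\<lambda>y. B y $ i $ j) x"
    using a by (intro pd_cong[of U x]) auto
  then show ?thesis unfolding dM_def by (simp add: vec_eq_iff)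
qed



lemma delta_r: "(\<Sum>l\<in>UNIV. F l * (if l = m then 1 else 0)) = (F m :: real)" for m :: "'n::finite"
proof -
  have "(\<Sum>l\<in>UNIV. F l * (if l = m then 1 else 0)) = (\<Sum>l\<in>UNIV. if l = m then F l else 0)" by (rule sum.cong) auto
  also have "\<dots> = F m" using sum.delta[of UNIV m F] by simp
  finally show ?thesis .
qed
lemma delta_l: "(\<Sum>l\<in>UNIV. (if l = m then 1 else 0) * F l) = (F m :: real)" for m :: "'n::finite"
proof -
  have "(\<Sum>l\<in>UNIV. (if l = m then 1 else 0) * F l) = (\<Sum>l\<in>UNIV. if l = m then F l else 0)" by (rule sum.cong) auto
  also have "\<dots> = F m" using sum.delta[of UNIV m F] by simp
  finally show ?thesis .
qed
lemma delta_r': "(\<Sum>l\<in>UNIV. F l * (if m = l then 1 else 0)) = (F m :: real)" for m :: "'n::finite"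
proof -
  have "(\<Sum>l\<in>UNIV. F l * (if m = l then 1 else 0)) = (\<Sum>l\<in>UNIV. if l = m then F l else 0)" by (rule sum.cong) auto
  also have "\<dots> = F m" using sum.delta[of UNIV m F] by simp
  finally show ?thesis .
qed
lemma delta_l': "(\<Sum>l\<in>UNIV. (if m = l then 1 else 0) * F l) = (F m :: real)" for m :: "'n::finite"
proof -
  have "(\<Sum>l\<in>UNIV. (if m = l then 1 else 0) * F l) = (\<Sum>l\<in>UNIV. if l = m then F l else 0)" by (rule sum.cong) auto
  also have "\<dots> = F m" using sum.delta[of UNIV m F] by simp
  finally show ?thesis .
qed

context metric begin

lemma sm_dg: "sm U (\<lambda>y. pd l (\<lambda>z. g z $ i $ j) y)" using sm_pd[OF sm_g] by simp

lemma sm_chr: "sm U (chr g k i j)"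
proof -
  have "sm U (\<lambda>x. chr g k i j x)"
    unfolding chr_def using U_open sm_ginv sm_dg
    by (intro sm_mult sm_sum sm_const sm_add sm_diff U_open) auto
  then show ?thesis by simp
qed

lemma dg_sym: "x \<in> U \<Longrightarrow> pd l (\<lambda>y. g y $ i $ j) x = pd l (\<lambda>y. g y $ j $ i) x"
  using g_sym by (intro pd_cong[OF U_open]) auto

lemma chr_sym: "x \<in> U \<Longrightarrow> chr g k i j x = chr g k j i x"
proof -
  assume x: "x \<in> U"
  show ?thesis unfolding chr_def using dg_sym[OF x, of _ i j] by (simp add: algebra_simps)
qed

lemma chr_lower: "x \<in> U \<Longrightarrow> (\<Sum>k\<in>UNIV. chr g k i j x * g x $ k $ m) =
  (1/2) * (pd i (\<lambda>y. g y $ j $ m) x + pd j (\<lambda>y. g y $ i $ m) x - pd m (\<lambda>y. g y $ i $ j) x)"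
proof -
  assume x: "x \<in> U"
  define E where "E l = pd i (\<lambda>y. g y $ j $ l) x + pd j (\<lambda>y. g y $ i $ l) x - pd l (\<lambda>y. g y $ i $ j) x" for l
  have "(\<Sum>k\<in>UNIV. chr g k i j x * g x $ k $ m) = (\<Sum>k\<in>UNIV. \<Sum>l\<in>UNIV. (1/2) * E l * (ginv g x $ l $ k * g x $ k $ m))"
    unfolding chr_def E_def using ginv_sym[OF x] by (simp add: sum_distrib_left sum_distrib_right mult_ac)
  also have "\<dots> = (\<Sum>l\<in>UNIV. (1/2) * E l * (\<Sum>k\<in>UNIV. ginv g x $ l $ k * g x $ k $ m))"
    by (subst sum.swap) (simp add: sum_distrib_left)
  also have "\<dots> = (1/2) * E m" using hg[OF x] delta_r[of "\<lambda>l. (1/2) * E l"] by simp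
  finally show ?thesis by (simp add: E_def)
qed

definition Gm :: "'n \<Rightarrow> real^'n \<Rightarrow> real^'n^'n" where "Gm c x = (\<chi> a b. chr g a c b x)"

lemma Gm_nth[simp]: "Gm c x $ a $ b = chr g a c b x" by (simp add: Gm_def)

lemma smM_Gm: "smM U (Gm c)" unfolding smM_def using sm_chr by simp
lemma smM_g: "smM U g" unfolding smM_def using sm_g by simp
lemma smM_ginv: "smM U (ginv g)" unfolding smM_def using sm_ginv by simp

lemma dg_formula: "x \<in> U \<Longrightarrow> pd c (\<lambda>y. g y $ a $ b) x =
   (\<Sum>k\<in>UNIV. chr g k c a x * g x $ k $ b) + (\<Sum>k\<in>UNIV. g x $ a $ k * chr g k c b x)"
proof -
  assume x: "x \<in> U"
  have "(\<Sum>k\<in>UNIV. g x $ a $ k * chr g k c b x) = (\<Sum>k\<in>UNIV. chr g k c b x * g x $ k $ a)"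
    using g_sym x by (simp add: mult.commute)
  then show ?thesis using chr_lower[OF x, of c a b] chr_lower[OF x, of c b a]
      dg_sym[OF x, of c b a] dg_sym[OF x, of a c b] dg_sym[OF x, of b c a] by simp
qed

lemma dM_g: "x \<in> U \<Longrightarrow> dM c g x = transpose (Gm c x) ** g x + g x ** Gm c x"
  by (simp add: dM_def vec_eq_iff dg_formula matrix_matrix_mult_def transpose_def)

lemma mm_cancel1: "x \<in> U \<Longrightarrow> X ** g x ** ginv g x = X"
  by (metis ginv_right matrix_mul_assoc matrix_mul_rid)
lemma mm_cancel2: "x \<in> U \<Longrightarrow> X ** ginv g x ** g x = X"
  by (metis ginv_left matrix_mul_assoc matrix_mul_rid)

lemma dM_ginv: "x \<in> U \<Longrightarrow> dM c (ginv g) x = - (Gm c x ** ginv g x + ginv g x ** transpose (Gm c x))"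
proof -
  assume x: "x \<in> U"
  have "dM c (\<lambda>y. ginv g y ** g y) x = dM c (\<lambda>y. mat 1) x"
    by (rule dM_cong[OF U_open x]) (simp add: ginv_left)
  then have "dM c (ginv g) x ** g x + ginv g x ** dM c g x = 0"
    using dM_mult[OF U_open x smM_ginv smM_g] dM_const by simp
  then have e: "dM c (ginv g) x ** g x = - (ginv g x ** dM c g x)" by (simp add: eq_neg_iff_add_eq_0)
  have "dM c (ginv g) x = dM c (ginv g) x ** g x ** ginv g x" by (simp add: mm_cancel1[OF x])
  also have "\<dots> = - (ginv g x ** dM c g x ** ginv g x)" by (simp add: e mm_simps)
  also have "\<dots> = - (Gm c x ** ginv g x + ginv g x ** transpose (Gm c x))"
    by (simp add: dM_g[OF x] mm_simps mm_cancel1[OF x] mm_cancel2 x ginv_left[OF x] algebra_simps)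
  finally show ?thesis .
qed

end



lemma antisym_alg:
  fixes gg Gc Gd dGdc dGcd dgc dgd ddgdc ddgcd :: "real^'n::finite^'n"
  assumes "transpose gg = gg" "dgc = transpose Gc ** gg + gg ** Gc" "dgd = transpose Gd ** gg + gg ** Gd"
    "ddgdc = transpose dGdc ** gg + transpose Gc ** dgd + dgd ** Gc + gg ** dGdc"
    "ddgcd = transpose dGcd ** gg + transpose Gd ** dgc + dgc ** Gd + gg ** dGcd"
    "ddgdc = ddgcd"
  shows "transpose (gg ** (dGcd - dGdc + Gc ** Gd - Gd ** Gc)) = - (gg ** (dGcd - dGdc + Gc ** Gd - Gd ** Gc))"
proof -
  have "transpose dGdc ** gg + transpose Gc ** dgd + dgd ** Gc + gg ** dGdc
      = transpose dGcd ** gg + transpose Gd ** dgc + dgc ** Gd + gg ** dGcd" using assms(4-6) by simp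
  then have e: "transpose dGdc ** gg + transpose Gc ** (transpose Gd ** gg + gg ** Gd) + (transpose Gd ** gg + gg ** Gd) ** Gc + gg ** dGdc
      = transpose dGcd ** gg + transpose Gd ** (transpose Gc ** gg + gg ** Gc) + (transpose Gc ** gg + gg ** Gc) ** Gd + gg ** dGcd"
    using assms(2,3) by simp
  then have e2: "transpose dGcd ** gg + gg ** dGcd = transpose dGdc ** gg + gg ** dGdc
      + transpose Gc ** transpose Gd ** gg - transpose Gd ** transpose Gc ** gg + gg ** Gd ** Gc - gg ** Gc ** Gd"
    by (simp add: mm_simps algebra_simps)
  show ?thesis using assms(1) e2 by (simp add: mm_simps algebra_simps)
qed

lemma bianchi_alg:
  fixes Ge Gc Gd dec ded dce dcd dde ddc ddec ddce ddcd dddc ddde dded :: "real^'n::finite^'n"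
  assumes "ddec = ddce" "ddcd = dddc" "ddde = dded"
  shows "let Rcd = dcd - ddc + Gc ** Gd - Gd ** Gc;
             Rde = dde - ded + Gd ** Ge - Ge ** Gd;
             Rec = dec - dce + Ge ** Gc - Gc ** Ge
         in ((ddec - dded + dec ** Gd + Gc ** ded - ded ** Gc - Gd ** dec) + Ge ** Rcd - Rcd ** Ge)
          + ((ddcd - ddce + dcd ** Ge + Gd ** dce - dce ** Gd - Ge ** dcd) + Gc ** Rde - Rde ** Gc)
          + ((ddde - dddc + dde ** Gc + Ge ** ddc - ddc ** Ge - Gc ** dde) + Gd ** Rec - Rec ** Gd) = 0"
  using assms by (simp add: Let_def mm_simps algebra_simps)

context metric begin

definition Rmm :: "'n \<Rightarrow> 'n \<Rightarrow> real^'n \<Rightarrow> real^'n^'n" where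
  "Rmm c d x = dM c (Gm d) x - dM d (Gm c) x + Gm c x ** Gm d x - Gm d x ** Gm c x"

lemma Rmm_antisym: "Rmm c d x = - Rmm d c x"
  unfolding Rmm_def by (simp add: algebra_simps)

lemma smM_Rmm: "smM U (Rmm c d)"
proof -
  have "smM U (\<lambda>x. dM c (Gm d) x - dM d (Gm c) x + Gm c x ** Gm d x - Gm d x ** Gm c x)"
    using smM_Gm by (intro smM_diff smM_add smM_mult smM_dM U_open)
  then show ?thesis unfolding Rmm_def[abs_def] .
qed

lemma dM_schwarz: "x \<in> U \<Longrightarrow> smM U A \<Longrightarrow> dM e (dM c A) x = dM c (dM e A) x"
  unfolding dM_def smM_def by (simp add: vec_eq_iff sm_schwarz[OF U_open])

lemma dM_Rmm: "x \<in> U \<Longrightarrow> dM e (Rmm c d) x = dM e (dM c (Gm d)) x - dM e (dM d (Gm c)) x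
   + dM e (Gm c) x ** Gm d x + Gm c x ** dM e (Gm d) x - dM e (Gm d) x ** Gm c x - Gm d x ** dM e (Gm c) x"
proof -
  assume x: "x \<in> U"
  note sms = smM_Gm smM_dM[OF smM_Gm] smM_mult[OF U_open smM_Gm smM_Gm]
  have "dM e (Rmm c d) x = dM e (\<lambda>x. dM c (Gm d) x - dM d (Gm c) x + Gm c x ** Gm d x - Gm d x ** Gm c x) x"
    unfolding Rmm_def[abs_def] ..
  also have "\<dots> = dM e (\<lambda>x. dM c (Gm d) x - dM d (Gm c) x + Gm c x ** Gm d x) x - dM e (\<lambda>x. Gm d x ** Gm c x) x"
    by (rule dM_diff[OF U_open x]) (intro smM_add smM_diff sms U_open)+
  also have "dM e (\<lambda>x. dM c (Gm d) x - dM d (Gm c) x + Gm c x ** Gm d x) x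
      = dM e (\<lambda>x. dM c (Gm d) x - dM d (Gm c) x) x + dM e (\<lambda>x. Gm c x ** Gm d x) x"
    by (rule dM_add[OF U_open x]) (intro smM_add smM_diff sms U_open)+
  also have "dM e (\<lambda>x. dM c (Gm d) x - dM d (Gm c) x) x = dM e (dM c (Gm d)) x - dM e (dM d (Gm c)) x"
    by (rule dM_diff[OF U_open x]) (intro sms)+
  finally show ?thesis
    by (simp add: dM_mult[OF U_open x smM_Gm smM_Gm] algebra_simps)
qed

definition CRm :: "'n \<Rightarrow> 'n \<Rightarrow> 'n \<Rightarrow> real^'n \<Rightarrow> real^'n^'n" where
  "CRm e c d x = dM e (Rmm c d) x + Gm e x ** Rmm c d x - Rmm c d x ** Gm e x
     - (\<Sum>k\<in>UNIV. chr g k e c x *\<^sub>R Rmm k d x) - (\<Sum>k\<in>UNIV. chr g k e d x *\<^sub>R Rmm c k x)"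

lemma bianchi2: "x \<in> U \<Longrightarrow> CRm e c d x + CRm c d e x + CRm d e c x = 0"
proof -
  assume x: "x \<in> U"
  have core: "(dM e (Rmm c d) x + Gm e x ** Rmm c d x - Rmm c d x ** Gm e x)
     + (dM c (Rmm d e) x + Gm c x ** Rmm d e x - Rmm d e x ** Gm c x)
     + (dM d (Rmm e c) x + Gm d x ** Rmm e c x - Rmm e c x ** Gm d x) = 0"
    unfolding dM_Rmm[OF x] unfolding Rmm_def
    by (simp add: dM_schwarz[OF x smM_Gm] mm_simps algebra_simps)
  have s1: "(\<Sum>k\<in>UNIV. chr g k e c x *\<^sub>R Rmm k d x) + (\<Sum>k\<in>UNIV. chr g k c e x *\<^sub>R Rmm d k x) = 0"
    by (simp add: chr_sym[OF x, of _ c e] Rmm_antisym[of d _ x] sum.distrib[symmetric] scaleR_right.sum[symmetric])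
  have s2: "(\<Sum>k\<in>UNIV. chr g k e d x *\<^sub>R Rmm c k x) + (\<Sum>k\<in>UNIV. chr g k d e x *\<^sub>R Rmm k c x) = 0"
    by (simp add: chr_sym[OF x, of _ d e] Rmm_antisym[of c _ x] sum.distrib[symmetric])
  have s3: "(\<Sum>k\<in>UNIV. chr g k c d x *\<^sub>R Rmm k e x) + (\<Sum>k\<in>UNIV. chr g k d c x *\<^sub>R Rmm e k x) = 0"
    by (simp add: chr_sym[OF x, of _ c d] Rmm_antisym[of e _ x] sum.distrib[symmetric])
  have "CRm e c d x + CRm c d e x + CRm d e c x =
     ((dM e (Rmm c d) x + Gm e x ** Rmm c d x - Rmm c d x ** Gm e x)
     + (dM c (Rmm d e) x + Gm c x ** Rmm d e x - Rmm d e x ** Gm c x)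
     + (dM d (Rmm e c) x + Gm d x ** Rmm e c x - Rmm e c x ** Gm d x))
     - ((\<Sum>k\<in>UNIV. chr g k e c x *\<^sub>R Rmm k d x) + (\<Sum>k\<in>UNIV. chr g k c e x *\<^sub>R Rmm d k x))
     - ((\<Sum>k\<in>UNIV. chr g k e d x *\<^sub>R Rmm c k x) + (\<Sum>k\<in>UNIV. chr g k d e x *\<^sub>R Rmm k c x))
     - ((\<Sum>k\<in>UNIV. chr g k c d x *\<^sub>R Rmm k e x) + (\<Sum>k\<in>UNIV. chr g k d c x *\<^sub>R Rmm e k x))"
    unfolding CRm_def by (simp add: algebra_simps)
  then show ?thesis using core s1 s2 s3 by simp
qed

end



lemma antisym_sym_contr:
  fixes A B :: "real^'n::finite^'n"
  assumes "transpose A = - A" "transpose B = B"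
  shows "(\<Sum>k\<in>UNIV. \<Sum>i\<in>UNIV. A $ k $ i * B $ i $ k) = 0"
proof -
  have a: "A $ i $ k = - A $ k $ i" for i k
  proof -
    have "transpose A $ k $ i = (- A) $ k $ i" using assms(1) by simp
    then show ?thesis by (simp add: transpose_def)
  qed
  have b: "B $ i $ k = B $ k $ i" for i k
  proof -
    have "transpose B $ k $ i = B $ k $ i" using assms(2) by simp
    then show ?thesis by (simp add: transpose_def)
  qed
  have "(\<Sum>k\<in>UNIV. \<Sum>i\<in>UNIV. A $ k $ i * B $ i $ k) = (\<Sum>i\<in>UNIV. \<Sum>k\<in>UNIV. A $ k $ i * B $ i $ k)"
    by (rule sum.swap)
  also have "\<dots> = - (\<Sum>i\<in>UNIV. \<Sum>k\<in>UNIV. A $ i $ k * B $ k $ i)"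
  proof -
    have "(\<Sum>i\<in>UNIV. \<Sum>k\<in>UNIV. A $ k $ i * B $ i $ k) = (\<Sum>i\<in>UNIV. \<Sum>k\<in>UNIV. - (A $ i $ k * B $ k $ i))"
    proof (intro sum.cong refl)
      fix i k
      have "A $ k $ i = - A $ i $ k" by (rule a)
      moreover have "B $ i $ k = B $ k $ i" by (rule b)
      ultimately show "A $ k $ i * B $ i $ k = - (A $ i $ k * B $ k $ i)" by (simp only: mult_minus_left)
    qed
    then show ?thesis by (simp add: sum_negf)
  qed
  finally show ?thesis by simp
qed

context metric begin

lemma smM_dMg: "smM U (dM c g)" by (rule smM_dM[OF smM_g])

lemma ddg: "x \<in> U \<Longrightarrow> dM d (dM c g) x = transpose (dM d (Gm c) x) ** g x + transpose (Gm c x) ** dM d g x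
   + dM d g x ** Gm c x + g x ** dM d (Gm c) x"
proof -
  assume x: "x \<in> U"
  have "dM d (dM c g) x = dM d (\<lambda>y. transpose (Gm c y) ** g y + g y ** Gm c y) x"
    by (rule dM_cong[OF U_open x]) (simp add: dM_g)
  also have "\<dots> = dM d (\<lambda>y. transpose (Gm c y) ** g y) x + dM d (\<lambda>y. g y ** Gm c y) x"
    by (rule dM_add[OF U_open x]) (intro smM_mult U_open smM_transpose smM_Gm smM_g)+
  also have "\<dots> = transpose (dM d (Gm c) x) ** g x + transpose (Gm c x) ** dM d g x
   + (dM d g x ** Gm c x + g x ** dM d (Gm c) x)"
    by (simp add: dM_mult[OF U_open x] smM_transpose smM_Gm smM_g dM_transpose)
  finally show ?thesis by (simp add: add.assoc)
qed

lemma gRm_antisym: "x \<in> U \<Longrightarrow> transpose (g x ** Rmm c d x) = - (g x ** Rmm c d x)"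
  unfolding Rmm_def
  by (rule antisym_alg[OF g_transpose dM_g dM_g ddg ddg dM_schwarz[OF _ smM_g]]) auto

lemma ginv_transpose: "x \<in> U \<Longrightarrow> transpose (ginv g x) = ginv g x"
  using ginv_sym by (simp add: transpose_def vec_eq_iff)

lemma RmH_antisym: "x \<in> U \<Longrightarrow> transpose (Rmm c d x ** ginv g x) = - (Rmm c d x ** ginv g x)"
proof -
  assume x: "x \<in> U"
  have "Rmm c d x = ginv g x ** (g x ** Rmm c d x)"
    by (simp add: matrix_mul_assoc ginv_left[OF x])
  then have "Rmm c d x ** ginv g x = ginv g x ** (g x ** Rmm c d x) ** ginv g x" by simp
  moreover have "transpose (ginv g x ** (g x ** Rmm c d x) ** ginv g x) = - (ginv g x ** (g x ** Rmm c d x) ** ginv g x)"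
    using gRm_antisym[OF x, of c d] ginv_transpose[OF x] by (simp add: matrix_transpose_mul mm_simps)
  ultimately show ?thesis by simp
qed

lemma Rm_trace: "x \<in> U \<Longrightarrow> (\<Sum>k\<in>UNIV. Rmm c d x $ k $ k) = 0"
proof -
  assume x: "x \<in> U"
  have "Rmm c d x = Rmm c d x ** ginv g x ** g x" by (simp add: mm_cancel2[OF x])
  then have "(\<Sum>k\<in>UNIV. Rmm c d x $ k $ k) = (\<Sum>k\<in>UNIV. \<Sum>i\<in>UNIV. (Rmm c d x ** ginv g x) $ k $ i * g x $ i $ k)"
    by (metis (no_types, lifting) matrix_matrix_mult_def sum.cong vec_lambda_beta)
  also have "\<dots> = 0" by (rule antisym_sym_contr[OF RmH_antisym[OF x] g_transpose[OF x]])
  finally show ?thesis .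
qed

end



context metric begin

lemma pd_chr_sym: "x \<in> U \<Longrightarrow> pd l (chr g k i j) x = pd l (chr g k j i) x"
  by (rule pd_cong[OF U_open]) (auto simp: chr_sym)

lemma ricci_Rmm: "x \<in> U \<Longrightarrow> ricci g b d x = (\<Sum>a\<in>UNIV. Rmm a d x $ a $ b)"
proof -
  assume x: "x \<in> U"
  have "Rmm a d x $ a $ b = pd a (chr g a d b) x - pd d (chr g a a b) x
      + (\<Sum>k\<in>UNIV. chr g a a k x * chr g k d b x) - (\<Sum>k\<in>UNIV. chr g a d k x * chr g k a b x)" for a
    by (simp add: Rmm_def dM_def matrix_matrix_mult_def)
  then have "(\<Sum>a\<in>UNIV. Rmm a d x $ a $ b) = (\<Sum>a\<in>UNIV. pd a (chr g a d b) x) - (\<Sum>a\<in>UNIV. pd d (chr g a a b) x)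
      + (\<Sum>a\<in>UNIV. \<Sum>k\<in>UNIV. chr g a a k x * chr g k d b x) - (\<Sum>a\<in>UNIV. \<Sum>k\<in>UNIV. chr g a d k x * chr g k a b x)"
    by (simp add: sum_subtractf sum.distrib)
  moreover have "ricci g b d x = (\<Sum>a\<in>UNIV. pd a (chr g a b d) x) - (\<Sum>a\<in>UNIV. pd d (chr g a b a) x)
      + (\<Sum>a\<in>UNIV. \<Sum>k\<in>UNIV. chr g a a k x * chr g k b d x) - (\<Sum>a\<in>UNIV. \<Sum>k\<in>UNIV. chr g a d k x * chr g k b a x)"
    by (simp add: ricci_def sum_subtractf sum.distrib)
  moreover have "(\<Sum>a\<in>UNIV. pd a (chr g a b d) x) = (\<Sum>a\<in>UNIV. pd a (chr g a d b) x)"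
    by (rule sum.cong[OF refl]) (rule pd_chr_sym[OF x])
  moreover have "(\<Sum>a\<in>UNIV. pd d (chr g a b a) x) = (\<Sum>a\<in>UNIV. pd d (chr g a a b) x)"
    by (rule sum.cong[OF refl]) (rule pd_chr_sym[OF x])
  moreover have "(\<Sum>a\<in>UNIV. \<Sum>k\<in>UNIV. chr g a a k x * chr g k b d x) = (\<Sum>a\<in>UNIV. \<Sum>k\<in>UNIV. chr g a a k x * chr g k d b x)"
    by (intro sum.cong refl) (simp add: chr_sym[OF x, of _ b d])
  moreover have "(\<Sum>a\<in>UNIV. \<Sum>k\<in>UNIV. chr g a d k x * chr g k b a x) = (\<Sum>a\<in>UNIV. \<Sum>k\<in>UNIV. chr g a d k x * chr g k a b x)"
    by (intro sum.cong refl) (simp add: chr_sym[OF x, of _ b])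
  ultimately show ?thesis by simp
qed

lemma chr_swap_sum: "(\<Sum>k\<in>UNIV. \<Sum>l\<in>UNIV. chr g k d l x * chr g l b k x) = (\<Sum>k\<in>UNIV. \<Sum>l\<in>UNIV. chr g k b l x * chr g l d k x)"
  by (subst sum.swap) (simp add: mult.commute)

lemma ricci_sym: "x \<in> U \<Longrightarrow> ricci g b d x = ricci g d b x"
proof -
  assume x: "x \<in> U"
  have e: "ricci g b d x = (\<Sum>k\<in>UNIV. pd k (chr g k b d) x) - (\<Sum>k\<in>UNIV. pd d (chr g k b k) x)
      + (\<Sum>k\<in>UNIV. \<Sum>l\<in>UNIV. chr g k k l x * chr g l b d x) - (\<Sum>k\<in>UNIV. \<Sum>l\<in>UNIV. chr g k d l x * chr g l b k x)" for b d
    by (simp add: ricci_def sum_subtractf sum.distrib)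
  have t: "(\<Sum>k\<in>UNIV. Rmm d b x $ k $ k) = (\<Sum>k\<in>UNIV. pd d (chr g k b k) x) - (\<Sum>k\<in>UNIV. pd b (chr g k d k) x)
      + (\<Sum>k\<in>UNIV. \<Sum>l\<in>UNIV. chr g k d l x * chr g l b k x) - (\<Sum>k\<in>UNIV. \<Sum>l\<in>UNIV. chr g k b l x * chr g l d k x)"
    by (simp add: Rmm_def dM_def matrix_matrix_mult_def sum_subtractf sum.distrib)
  have a: "(\<Sum>k\<in>UNIV. pd k (chr g k b d) x) = (\<Sum>k\<in>UNIV. pd k (chr g k d b) x)"
    by (rule sum.cong[OF refl]) (rule pd_chr_sym[OF x])
  have b: "(\<Sum>k\<in>UNIV. \<Sum>l\<in>UNIV. chr g k k l x * chr g l b d x) = (\<Sum>k\<in>UNIV. \<Sum>l\<in>UNIV. chr g k k l x * chr g l d b x)"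
    by (intro sum.cong refl) (simp add: chr_sym[OF x, of _ b d])
  show ?thesis using e[of b d] e[of d b] t Rm_trace[OF x, of d b] a b chr_swap_sum[of d x b] by linarith
qed

end



context metric begin

lemma smM_diffble: "smM U A \<Longrightarrow> x \<in> U \<Longrightarrow> (\<lambda>y. A y $ i $ j) differentiable (at x)"
  unfolding smM_def by (blast intro: sm_diffble)

lemma Ric_L1: "x \<in> U \<Longrightarrow> (\<Sum>a\<in>UNIV. CRm e a d x $ a $ b) = cov2 g (\<lambda>y p q. ricci g p q y) e b d x"
proof -
  assume x: "x \<in> U"
  have c: "CRm e a d x $ a $ b = pd e (\<lambda>y. Rmm a d y $ a $ b) x + (\<Sum>k\<in>UNIV. chr g a e k x * Rmm a d x $ k $ b)
     - (\<Sum>k\<in>UNIV. Rmm a d x $ a $ k * chr g k e b x) - (\<Sum>k\<in>UNIV. chr g k e a x * Rmm k d x $ a $ b)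
     - (\<Sum>k\<in>UNIV. chr g k e d x * Rmm a k x $ a $ b)" for a
    by (simp add: CRm_def dM_def matrix_matrix_mult_def sum_component)
  have p1: "(\<Sum>a\<in>UNIV. pd e (\<lambda>y. Rmm a d y $ a $ b) x) = pd e (\<lambda>y. ricci g b d y) x"
  proof -
    have "(\<Sum>a\<in>UNIV. pd e (\<lambda>y. Rmm a d y $ a $ b) x) = pd e (\<lambda>y. \<Sum>a\<in>UNIV. Rmm a d y $ a $ b) x"
      by (rule pd_sum[symmetric]) (auto intro: smM_diffble[OF smM_Rmm x])
    also have "\<dots> = pd e (\<lambda>y. ricci g b d y) x"
      by (rule pd_cong[OF U_open x]) (simp add: ricci_Rmm)
    finally show ?thesis .
  qed
  have p2: "(\<Sum>a\<in>UNIV. \<Sum>k\<in>UNIV. chr g a e k x * Rmm a d x $ k $ b) = (\<Sum>a\<in>UNIV. \<Sum>k\<in>UNIV. chr g k e a x * Rmm k d x $ a $ b)"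
    by (rule sum.swap)
  have p3: "(\<Sum>a\<in>UNIV. \<Sum>k\<in>UNIV. Rmm a d x $ a $ k * chr g k e b x) = (\<Sum>k\<in>UNIV. chr g k e b x * ricci g k d x)"
    by (subst sum.swap) (simp add: ricci_Rmm[OF x] sum_distrib_left mult.commute)
  have p4: "(\<Sum>a\<in>UNIV. \<Sum>k\<in>UNIV. chr g k e d x * Rmm a k x $ a $ b) = (\<Sum>k\<in>UNIV. chr g k e d x * ricci g b k x)"
    by (subst sum.swap) (simp add: ricci_Rmm[OF x] sum_distrib_left)
  have "(\<Sum>a\<in>UNIV. CRm e a d x $ a $ b) = (\<Sum>a\<in>UNIV. pd e (\<lambda>y. Rmm a d y $ a $ b) x)
     + (\<Sum>a\<in>UNIV. \<Sum>k\<in>UNIV. chr g a e k x * Rmm a d x $ k $ b)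
     - (\<Sum>a\<in>UNIV. \<Sum>k\<in>UNIV. Rmm a d x $ a $ k * chr g k e b x) - (\<Sum>a\<in>UNIV. \<Sum>k\<in>UNIV. chr g k e a x * Rmm k d x $ a $ b)
     - (\<Sum>a\<in>UNIV. \<Sum>k\<in>UNIV. chr g k e d x * Rmm a k x $ a $ b)"
    unfolding c by (simp add: sum_subtractf sum.distrib)
  then show ?thesis unfolding cov2_def using p1 p2 p3 p4 by simp
qed

lemma dM_neg: "x \<in> U \<Longrightarrow> smM U A \<Longrightarrow> dM c (\<lambda>y. - A y) x = - dM c A x"
  using dM_diff[OF U_open, of x "\<lambda>_. 0" A c] dM_const[of c 0 x] by (simp add: smM_def U_open)

lemma Rmm_fun_antisym: "Rmm e a = (\<lambda>y. - Rmm a e y)"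
  by (rule ext) (rule Rmm_antisym)

lemma CRm_antisym: "x \<in> U \<Longrightarrow> CRm d e a x = - CRm d a e x"
proof -
  assume x: "x \<in> U"
  have "dM d (Rmm e a) x = - dM d (Rmm a e) x"
    by (subst Rmm_fun_antisym) (rule dM_neg[OF x smM_Rmm])
  moreover have "(\<Sum>k\<in>UNIV. chr g k d e x *\<^sub>R Rmm k a x) = - (\<Sum>k\<in>UNIV. chr g k d e x *\<^sub>R Rmm a k x)"
    by (simp add: Rmm_antisym[of _ a x] sum_negf)
  moreover have "(\<Sum>k\<in>UNIV. chr g k d a x *\<^sub>R Rmm e k x) = - (\<Sum>k\<in>UNIV. chr g k d a x *\<^sub>R Rmm k e x)"
    by (simp add: Rmm_antisym[of e _ x] sum_negf)
  moreover have "Rmm e a x = - Rmm a e x" by (rule Rmm_antisym)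
  ultimately show ?thesis unfolding CRm_def by (simp add: mm_simps algebra_simps)
qed

lemma QR_eq: "x \<in> U \<Longrightarrow> (\<Sum>e\<in>UNIV. (Rmm d e x ** ginv g x) $ a $ e) = (\<Sum>b\<in>UNIV. ginv g x $ a $ b * ricci g b d x)"
proof -
  assume x: "x \<in> U"
  have t: "(Rmm d e x ** ginv g x) $ a $ e = - (Rmm d e x ** ginv g x) $ e $ a" for e
  proof -
    have "transpose (Rmm d e x ** ginv g x) $ e $ a = (- (Rmm d e x ** ginv g x)) $ e $ a"
      using RmH_antisym[OF x] by simp
    then show ?thesis by (simp add: transpose_def)
  qed
  have "(\<Sum>e\<in>UNIV. (Rmm d e x ** ginv g x) $ a $ e) = - (\<Sum>e\<in>UNIV. \<Sum>b\<in>UNIV. Rmm d e x $ e $ b * ginv g x $ b $ a)"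
  proof -
    have "(\<Sum>e\<in>UNIV. (Rmm d e x ** ginv g x) $ a $ e) = (\<Sum>e\<in>UNIV. - (Rmm d e x ** ginv g x) $ e $ a)"
      by (rule sum.cong[OF refl]) (rule t)
    then show ?thesis by (simp add: sum_negf matrix_matrix_mult_def)
  qed
  also have "\<dots> = (\<Sum>e\<in>UNIV. \<Sum>b\<in>UNIV. Rmm e d x $ e $ b * ginv g x $ b $ a)"
    by (simp add: Rmm_antisym[of d _ x] sum_negf)
  also have "\<dots> = (\<Sum>b\<in>UNIV. ginv g x $ a $ b * ricci g b d x)"
    by (subst sum.swap) (simp add: ricci_Rmm[OF x] sum_distrib_left sum_distrib_right ginv_sym[OF x, of b a for b] mult.commute)
  finally show ?thesis .
qed

end



lemma swap_inner: "(\<Sum>a\<in>A. \<Sum>b\<in>B. \<Sum>c\<in>C. f a b c) = (\<Sum>a\<in>A. \<Sum>c\<in>C. \<Sum>b\<in>B. f a b c)"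
  by (rule sum.cong[OF refl]) (rule sum.swap)

lemma mm_sum_r: "(\<Sum>k\<in>A. f k) ** (M::real^'n::finite^'n) = (\<Sum>k\<in>A. f k ** M)"
  by (induction A rule: infinite_finite_induct) (auto simp: mm_add_r mm_zero_l)

lemma mm_transpose_nth: "(M ** transpose N) $ a $ e = (\<Sum>k\<in>UNIV. M $ a $ k * N $ e $ k)"
  by (simp add: matrix_matrix_mult_def transpose_def)

context metric begin

definition Dv :: "(real^'n \<Rightarrow> 'n \<Rightarrow> 'n \<Rightarrow> real) \<Rightarrow> 'n \<Rightarrow> real^'n \<Rightarrow> real" where
  "Dv Q d x = (\<Sum>a\<in>UNIV. pd a (\<lambda>y. Q y a d) x) + (\<Sum>a\<in>UNIV. \<Sum>k\<in>UNIV. chr g a a k x * Q x k d)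
     - (\<Sum>a\<in>UNIV. \<Sum>k\<in>UNIV. chr g k a d x * Q x a k)"

lemma Dv_cong: "x \<in> U \<Longrightarrow> (\<And>y a d. y \<in> U \<Longrightarrow> Q y a d = Q' y a d) \<Longrightarrow> Dv Q d x = Dv Q' d x"
  unfolding Dv_def by (simp add: pd_cong[OF U_open, of x "\<lambda>y. Q y _ d" "\<lambda>y. Q' y _ d"])

lemma L3a: "x \<in> U \<Longrightarrow> (\<Sum>a\<in>UNIV. \<Sum>e\<in>UNIV. (CRm a d e x ** ginv g x) $ a $ e)
   = Dv (\<lambda>y a d. \<Sum>e\<in>UNIV. (Rmm d e y ** ginv g y) $ a $ e) d x"
proof -
  assume x: "x \<in> U"
  let ?H = "ginv g x"
  have m: "CRm a d e x ** ?H = dM a (\<lambda>y. Rmm d e y ** ginv g y) x + Gm a x ** (Rmm d e x ** ?H)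
     + Rmm d e x ** ?H ** transpose (Gm a x) - (\<Sum>k\<in>UNIV. chr g k a d x *\<^sub>R (Rmm k e x ** ?H))
     - (\<Sum>k\<in>UNIV. chr g k a e x *\<^sub>R (Rmm d k x ** ?H))" for a e
    unfolding CRm_def dM_mult[OF U_open x smM_Rmm smM_ginv] dM_ginv[OF x]
    by (simp add: mm_simps mm_sum_r algebra_simps)
  have t1: "(\<Sum>e\<in>UNIV. dM a (\<lambda>y. Rmm d e y ** ginv g y) x $ a $ e) = pd a (\<lambda>y. \<Sum>e\<in>UNIV. (Rmm d e y ** ginv g y) $ a $ e) x" for a
    unfolding dM_def
    by (simp add: pd_sum smM_diffble[OF smM_mult[OF U_open smM_Rmm smM_ginv] x])
  have t2: "(\<Sum>e\<in>UNIV. (Gm a x ** (Rmm d e x ** ?H)) $ a $ e)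
     = (\<Sum>k\<in>UNIV. chr g a a k x * (\<Sum>e\<in>UNIV. (Rmm d e x ** ?H) $ k $ e))" for a
    by (simp add: matrix_matrix_mult_def[of "Gm _ x"] sum_distrib_left) (rule sum.swap)
  have t3: "(\<Sum>e\<in>UNIV. (Rmm d e x ** ?H ** transpose (Gm a x)) $ a $ e)
      = (\<Sum>e\<in>UNIV. \<Sum>k\<in>UNIV. (chr g k a e x *\<^sub>R (Rmm d k x ** ?H)) $ a $ e)" for a
    by (simp add: mm_transpose_nth sum_component mult.commute) (rule sum.swap)
  have t4: "(\<Sum>e\<in>UNIV. \<Sum>k\<in>UNIV. (chr g k a d x *\<^sub>R (Rmm k e x ** ?H)) $ a $ e)
     = (\<Sum>k\<in>UNIV. chr g k a d x * (\<Sum>e\<in>UNIV. (Rmm k e x ** ?H) $ a $ e))" for a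
    by (simp add: sum_component sum_distrib_left) (rule sum.swap)
  show ?thesis
    unfolding Dv_def m
    by (simp add: sum_subtractf sum.distrib t1 t2 t3 t4 sum_component del: vector_scaleR_component)
qed

end



context metric begin

lemma sm_ricci: "sm U (\<lambda>y. ricci g b d y)"
  unfolding ricci_def using sm_chr U_open
  by (intro sm_add sm_sum sm_diff sm_mult sm_pd U_open) auto

lemma pd_ginv: "x \<in> U \<Longrightarrow> pd a (\<lambda>y. ginv g y $ i $ j) x =
   - ((\<Sum>k\<in>UNIV. chr g i a k x * ginv g x $ k $ j) + (\<Sum>k\<in>UNIV. ginv g x $ i $ k * chr g j a k x))"
proof -
  assume x: "x \<in> U"
  have "pd a (\<lambda>y. ginv g y $ i $ j) x = dM a (ginv g) x $ i $ j" by (simp add: dM_def)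
  then show ?thesis by (simp add: dM_ginv[OF x] matrix_matrix_mult_def transpose_def)
qed

lemma L3b: "x \<in> U \<Longrightarrow> Dv (\<lambda>y a d. \<Sum>b\<in>UNIV. ginv g y $ a $ b * ricci g b d y) d x
   = (\<Sum>a\<in>UNIV. \<Sum>f\<in>UNIV. ginv g x $ a $ f * cov2 g (\<lambda>y p q. ricci g p q y) a f d x)"
proof -
  assume x: "x \<in> U"
  let ?h = "\<lambda>i j. ginv g x $ i $ j" and ?R = "\<lambda>i j. ricci g i j x"
  have p: "pd a (\<lambda>y. \<Sum>b\<in>UNIV. ginv g y $ a $ b * ricci g b d y) x
     = (\<Sum>b\<in>UNIV. pd a (\<lambda>y. ginv g y $ a $ b) x * ?R b d + ?h a b * pd a (\<lambda>y. ricci g b d y) x)" for a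
    by (simp add: pd_sum pd_mult sm_diffble[OF sm_ginv x] sm_diffble[OF sm_ricci x] differentiable_mult)
  define A1 where "A1 = (\<Sum>a\<in>UNIV. \<Sum>b\<in>UNIV. \<Sum>k\<in>UNIV. chr g a a k x * ?h k b * ?R b d)"
  define B where "B = (\<Sum>a\<in>UNIV. \<Sum>b\<in>UNIV. \<Sum>k\<in>UNIV. ?h a k * chr g b a k x * ?R b d)"
  define P where "P = (\<Sum>a\<in>UNIV. \<Sum>b\<in>UNIV. ?h a b * pd a (\<lambda>y. ricci g b d y) x)"
  have e1: "(\<Sum>a\<in>UNIV. pd a (\<lambda>y. \<Sum>b\<in>UNIV. ginv g y $ a $ b * ricci g b d y) x) = - A1 - B + P"
    unfolding p pd_ginv[OF x] A1_def B_def P_def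
    by (simp add: sum.distrib sum_subtractf sum_negf sum_distrib_left sum_distrib_right ring_distribs)
  have e2: "(\<Sum>a\<in>UNIV. \<Sum>k\<in>UNIV. chr g a a k x * (\<Sum>b\<in>UNIV. ?h k b * ?R b d)) = A1"
    unfolding A1_def by (rule sum.cong[OF refl]) (simp add: sum_distrib_left mult.assoc, rule sum.swap)
  have e3: "(\<Sum>a\<in>UNIV. \<Sum>k\<in>UNIV. chr g k a d x * (\<Sum>b\<in>UNIV. ?h a b * ?R b k))
      = (\<Sum>a\<in>UNIV. \<Sum>f\<in>UNIV. \<Sum>k\<in>UNIV. ?h a f * chr g k a d x * ?R f k)"
    by (rule sum.cong[OF refl]) (simp add: sum_distrib_left mult_ac, rule sum.swap)
  have e4: "B = (\<Sum>a\<in>UNIV. \<Sum>f\<in>UNIV. \<Sum>k\<in>UNIV. ?h a f * chr g k a f x * ?R k d)"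
    unfolding B_def by (rule swap_inner)
  have rhs: "(\<Sum>a\<in>UNIV. \<Sum>f\<in>UNIV. ?h a f * cov2 g (\<lambda>y p q. ricci g p q y) a f d x)
     = P - (\<Sum>a\<in>UNIV. \<Sum>f\<in>UNIV. \<Sum>k\<in>UNIV. ?h a f * chr g k a f x * ?R k d)
       - (\<Sum>a\<in>UNIV. \<Sum>f\<in>UNIV. \<Sum>k\<in>UNIV. ?h a f * chr g k a d x * ?R f k)"
    unfolding cov2_def P_def
    by (simp add: sum.distrib sum_subtractf sum_distrib_left ring_distribs mult_ac)
  show ?thesis
    unfolding Dv_def e1 rhs using e2 e3 e4 by simp
qed

end



context metric begin

abbreviation "DR e b d x \<equiv> cov2 g (\<lambda>y p q. ricci g p q y) e b d x"

lemma DR_sym: "x \<in> U \<Longrightarrow> DR e b a x = DR e a b x"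
proof -
  assume x: "x \<in> U"
  have "pd e (\<lambda>y. ricci g b a y) x = pd e (\<lambda>y. ricci g a b y) x"
    by (rule pd_cong[OF U_open x]) (simp add: ricci_sym)
  then show ?thesis unfolding cov2_def using ricci_sym[OF x] by (simp add: algebra_simps)
qed

lemma bianchi_contr1: "x \<in> U \<Longrightarrow> DR e b d x + (\<Sum>a\<in>UNIV. CRm a d e x $ a $ b) - DR d b e x = 0"
proof -
  assume x: "x \<in> U"
  have "(\<Sum>a\<in>UNIV. (CRm e a d x + CRm a d e x + CRm d e a x) $ a $ b) = 0"
    using bianchi2[OF x] by simp
  moreover have "(\<Sum>a\<in>UNIV. CRm d e a x $ a $ b) = - DR d b e x"
    using Ric_L1[OF x, of d e b] by (simp add: CRm_antisym[OF x, of d e] sum_negf)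
  ultimately show ?thesis using Ric_L1[OF x, of e d b] by (simp add: sum.distrib)
qed

lemma contracted_bianchi: "x \<in> U \<Longrightarrow>
  (\<Sum>b\<in>UNIV. \<Sum>c\<in>UNIV. ginv g x $ b $ c * DR c a b x) = (1/2) * (\<Sum>b\<in>UNIV. \<Sum>c\<in>UNIV. ginv g x $ b $ c * DR a b c x)"
proof -
  assume x: "x \<in> U"
  let ?h = "\<lambda>i j. ginv g x $ i $ j"
  have w: "(\<Sum>b\<in>UNIV. \<Sum>e\<in>UNIV. ?h b e * (\<Sum>a\<in>UNIV. CRm a d e x $ a $ b))
      = (\<Sum>a\<in>UNIV. \<Sum>f\<in>UNIV. ?h a f * DR a f d x)" for d
  proof -
    have "(\<Sum>b\<in>UNIV. \<Sum>e\<in>UNIV. ?h b e * (\<Sum>a\<in>UNIV. CRm a d e x $ a $ b))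
        = (\<Sum>a\<in>UNIV. \<Sum>e\<in>UNIV. (CRm a d e x ** ginv g x) $ a $ e)"
    proof -
      have "(\<Sum>b\<in>UNIV. \<Sum>e\<in>UNIV. ?h b e * (\<Sum>a\<in>UNIV. CRm a d e x $ a $ b))
          = (\<Sum>e\<in>UNIV. \<Sum>b\<in>UNIV. \<Sum>a\<in>UNIV. CRm a d e x $ a $ b * ?h b e)"
        by (subst sum.swap) (simp add: sum_distrib_left mult.commute)
      also have "\<dots> = (\<Sum>e\<in>UNIV. \<Sum>a\<in>UNIV. \<Sum>b\<in>UNIV. CRm a d e x $ a $ b * ?h b e)"
        by (rule sum.cong[OF refl]) (rule sum.swap)
      also have "\<dots> = (\<Sum>a\<in>UNIV. \<Sum>e\<in>UNIV. (CRm a d e x ** ginv g x) $ a $ e)"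
        by (subst sum.swap) (simp add: matrix_matrix_mult_def)
      finally show ?thesis .
    qed
    also have "\<dots> = Dv (\<lambda>y a d. \<Sum>e\<in>UNIV. (Rmm d e y ** ginv g y) $ a $ e) d x" by (rule L3a[OF x])
    also have "\<dots> = Dv (\<lambda>y a d. \<Sum>b\<in>UNIV. ginv g y $ a $ b * ricci g b d y) d x"
      by (rule Dv_cong[OF x]) (rule QR_eq)
    also have "\<dots> = (\<Sum>a\<in>UNIV. \<Sum>f\<in>UNIV. ?h a f * DR a f d x)" by (rule L3b[OF x])
    finally show ?thesis .
  qed
  have s: "(\<Sum>b\<in>UNIV. \<Sum>e\<in>UNIV. ?h b e * DR e b d x) + (\<Sum>b\<in>UNIV. \<Sum>e\<in>UNIV. ?h b e * (\<Sum>a\<in>UNIV. CRm a d e x $ a $ b))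
     - (\<Sum>b\<in>UNIV. \<Sum>e\<in>UNIV. ?h b e * DR d b e x) = 0" for d
  proof -
    have "(\<Sum>b\<in>UNIV. \<Sum>e\<in>UNIV. ?h b e * (DR e b d x + (\<Sum>a\<in>UNIV. CRm a d e x $ a $ b) - DR d b e x)) = 0"
      by (simp add: bianchi_contr1[OF x])
    then show ?thesis by (simp add: ring_distribs sum.distrib sum_subtractf)
  qed
  have r: "(\<Sum>a\<in>UNIV. \<Sum>f\<in>UNIV. ?h a f * DR a f d x) = (\<Sum>b\<in>UNIV. \<Sum>e\<in>UNIV. ?h b e * DR e b d x)" for d
    by (subst sum.swap) (simp add: ginv_sym[OF x, of _ b for b])
  have "2 * (\<Sum>b\<in>UNIV. \<Sum>e\<in>UNIV. ?h b e * DR e b a x) = (\<Sum>b\<in>UNIV. \<Sum>e\<in>UNIV. ?h b e * DR a b e x)"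
    using s[of a] w[of a] r[of a] by simp
  moreover have "(\<Sum>b\<in>UNIV. \<Sum>e\<in>UNIV. ?h b e * DR e b a x) = (\<Sum>b\<in>UNIV. \<Sum>c\<in>UNIV. ?h b c * DR c a b x)"
    by (simp add: DR_sym[OF x, of _ _ a])
  ultimately show ?thesis by simp
qed

end



definition dV :: "'n::finite \<Rightarrow> (real^'n \<Rightarrow> real^'m) \<Rightarrow> real^'n \<Rightarrow> real^'m" where
  "dV c w x = (\<chi> b. pd c (\<lambda>y. w y $ b) x)"

definition smV :: "(real^'n::finite) set \<Rightarrow> (real^'n \<Rightarrow> real^'m) \<Rightarrow> bool" where
  "smV U w \<longleftrightarrow> (\<forall>b. sm U (\<lambda>y. w y $ b))"

lemma smV_diffble: "smV U w \<Longrightarrow> x \<in> U \<Longrightarrow> (\<lambda>y. w y $ b) differentiable (at x)"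
  unfolding smV_def by (blast intro: sm_diffble)

lemma smV_vm: "open U \<Longrightarrow> smV U w \<Longrightarrow> smM U A \<Longrightarrow> smV U (\<lambda>y. w y v* A y)"
  unfolding smV_def smM_def vector_matrix_mult_def by (auto intro!: sm_sum sm_mult)
lemma smV_add: "open U \<Longrightarrow> smV U w \<Longrightarrow> smV U v \<Longrightarrow> smV U (\<lambda>y. w y + v y)"
  unfolding smV_def by (auto intro!: sm_add)
lemma smV_diff: "open U \<Longrightarrow> smV U w \<Longrightarrow> smV U v \<Longrightarrow> smV U (\<lambda>y. w y - v y)"
  unfolding smV_def by (auto intro!: sm_diff)
lemma smV_dV: "smV U w \<Longrightarrow> smV U (dV c w)"
  unfolding smV_def dV_def by (auto intro!: sm_pd)

lemma dV_vm:
  assumes U: "open U" "x \<in> U" and w: "smV U w" and A: "smM U A"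
  shows "dV c (\<lambda>y. w y v* A y) x = dV c w x v* A x + w x v* dM c A x"
proof -
  have dA: "\<And>i j. (\<lambda>y. A y $ i $ j) differentiable (at x)" using A U unfolding smM_def by (blast intro: sm_diffble)
  have dw: "\<And>i. (\<lambda>y. w y $ i) differentiable (at x)" using w U unfolding smV_def by (blast intro: sm_diffble)
  show ?thesis
    unfolding dV_def dM_def vector_matrix_mult_def
    by (simp add: vec_eq_iff pd_sum pd_mult dA dw differentiable_mult sum.distrib)
qed

lemma dV_diff:
  assumes U: "open U" "x \<in> U" and w: "smV U w" and v: "smV U v"
  shows "dV c (\<lambda>y. w y - v y) x = dV c w x - dV c v x"
  unfolding dV_def using smV_diffble[OF w U(2)] smV_diffble[OF v U(2)] by (simp add: vec_eq_iff pd_diff)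

lemma dV_cong: "open U \<Longrightarrow> x \<in> U \<Longrightarrow> (\<And>y. y \<in> U \<Longrightarrow> A y = B y) \<Longrightarrow> dV c A x = dV c B x"
proof -
  assume a: "open U" "x \<in> U" "\<And>y. y \<in> U \<Longrightarrow> A y = B y"
  have "\<And>i. pd c (\<lambda>y. A y $ i) x = pd c (\<lambda>y. B y $ i) x"
    using a by (intro pd_cong[of U x]) auto
  then show ?thesis unfolding dV_def by (simp add: vec_eq_iff)
qed

lemma vm_sum_r: "(v::real^'n::finite) v* (\<Sum>k\<in>A. f k) = (\<Sum>k\<in>A. v v* f k)"
  by (induction A rule: infinite_finite_induct) (simp_all add: vector_matrix_mult_add_rdistrib)

lemma vm_nth: "((v::real^'n::finite) v* M) $ b = (\<Sum>k\<in>UNIV. v $ k * M $ k $ b)"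
  by (simp add: vector_matrix_mult_def)

context metric begin

definition CV :: "'n \<Rightarrow> (real^'n \<Rightarrow> real^'n) \<Rightarrow> real^'n \<Rightarrow> real^'n" where
  "CV a w x = dV a w x - w x v* Gm a x"

lemma cov1_CV: "cov1 g w a b x = CV a w x $ b"
  by (simp add: cov1_def CV_def dV_def vm_nth mult.commute)

lemma smV_CV: "smV U w \<Longrightarrow> smV U (CV a w)"
  unfolding CV_def[abs_def] by (intro smV_diff smV_vm U_open smV_dV smM_Gm)

lemma cov2_CV: "cov2 g (\<lambda>y p q. cov1 g w p q y) c a b x
   = (dV c (CV a w) x - CV a w x v* Gm c x - (\<Sum>k\<in>UNIV. chr g k c a x *\<^sub>R CV k w x)) $ b"
  by (simp add: cov2_def cov1_CV dV_def vm_nth sum_component mult.commute)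

lemma ricci_identity: "x \<in> U \<Longrightarrow> smV U w \<Longrightarrow>
   cov2 g (\<lambda>y p q. cov1 g w p q y) c a b x - cov2 g (\<lambda>y p q. cov1 g w p q y) a c b x = - (w x v* Rmm c a x) $ b"
proof -
  assume x: "x \<in> U" and w: "smV U w"
  have dd: "dV c (CV a w) x = dV c (dV a w) x - (dV c w x v* Gm a x + w x v* dM c (Gm a) x)" for c a
    unfolding CV_def[abs_def] by (simp add: dV_diff[OF U_open x] smV_dV w smV_vm U_open smM_Gm dV_vm[OF U_open x w smM_Gm])
  have sw: "dV c (dV a w) x = dV a (dV c w) x"
    using w unfolding dV_def smV_def by (simp add: vec_eq_iff sm_schwarz[OF U_open x])
  have cs: "(\<Sum>k\<in>UNIV. chr g k c a x *\<^sub>R CV k w x) = (\<Sum>k\<in>UNIV. chr g k a c x *\<^sub>R CV k w x)"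
    by (simp add: chr_sym[OF x, of _ c a])
  have "(dV c (CV a w) x - CV a w x v* Gm c x - (\<Sum>k\<in>UNIV. chr g k c a x *\<^sub>R CV k w x))
     - (dV a (CV c w) x - CV c w x v* Gm a x - (\<Sum>k\<in>UNIV. chr g k a c x *\<^sub>R CV k w x)) = - (w x v* Rmm c a x)"
    unfolding dd cs sw unfolding CV_def Rmm_def
    by (simp add: algebra_simps vector_matrix_mul_assoc)
  then have "(dV c (CV a w) x - CV a w x v* Gm c x - (\<Sum>k\<in>UNIV. chr g k c a x *\<^sub>R CV k w x)) $ b
     - (dV a (CV c w) x - CV c w x v* Gm a x - (\<Sum>k\<in>UNIV. chr g k a c x *\<^sub>R CV k w x)) $ b = (- (w x v* Rmm c a x)) $ b"
    by (simp only: vector_minus_component[symmetric])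
  then show ?thesis unfolding cov2_CV by simp
qed

end



definition sm2 :: "(real^'n::finite) set \<Rightarrow> (real^'n \<Rightarrow> 'n \<Rightarrow> 'n \<Rightarrow> real) \<Rightarrow> bool" where
  "sm2 U T \<longleftrightarrow> (\<forall>p q. sm U (\<lambda>y. T y p q))"

context metric begin

lemma sm2_diffble: "sm2 U T \<Longrightarrow> x \<in> U \<Longrightarrow> (\<lambda>y. T y p q) differentiable (at x)"
  unfolding sm2_def by (blast intro: sm_diffble)

lemma sm2_cov1: "smV U w \<Longrightarrow> sm2 U (\<lambda>y p q. cov1 g w p q y)"
  unfolding sm2_def smV_def cov1_def using sm_chr
  by (auto intro!: sm_diff sm_sum sm_mult sm_pd U_open)

lemma cov2_cong: "x \<in> U \<Longrightarrow> (\<And>y p q. y \<in> U \<Longrightarrow> T y p q = T' y p q) \<Longrightarrow> cov2 g T c i j x = cov2 g T' c i j x"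
proof -
  assume x: "x \<in> U" and e: "\<And>y p q. y \<in> U \<Longrightarrow> T y p q = T' y p q"
  have "pd c (\<lambda>y. T y i j) x = pd c (\<lambda>y. T' y i j) x" by (rule pd_cong[OF U_open x]) (simp add: e)
  then show ?thesis unfolding cov2_def using e[OF x] by simp
qed

lemma cov2_add: "x \<in> U \<Longrightarrow> sm2 U T1 \<Longrightarrow> sm2 U T2 \<Longrightarrow>
  cov2 g (\<lambda>y p q. T1 y p q + T2 y p q) c i j x = cov2 g T1 c i j x + cov2 g T2 c i j x"
  unfolding cov2_def by (simp add: pd_add sm2_diffble ring_distribs sum.distrib)

lemma cov2_fT: "x \<in> U \<Longrightarrow> sm U f \<Longrightarrow> sm2 U T \<Longrightarrow>
  cov2 g (\<lambda>y p q. f y * T y p q) c i j x = pd c f x * T x i j + f x * cov2 g T c i j x"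
  unfolding cov2_def by (simp add: pd_mult sm2_diffble sm_diffble ring_distribs sum_distrib_left sum_subtractf mult_ac)

lemma cov2_uv: "x \<in> U \<Longrightarrow> smV U u \<Longrightarrow> smV U v \<Longrightarrow>
  cov2 g (\<lambda>y p q. u y $ p * v y $ q) c i j x = cov1 g u c i x * v x $ j + u x $ i * cov1 g v c j x"
  unfolding cov2_def cov1_def
  by (simp add: pd_mult smV_diffble ring_distribs sum_distrib_left sum_distrib_right sum_subtractf mult_ac)

lemma cov2_symm: "x \<in> U \<Longrightarrow> sm2 U T \<Longrightarrow>
  cov2 g (\<lambda>y p q. (T y p q + T y q p) / 2) c i j x = (cov2 g T c i j x + cov2 g T c j i x) / 2"
proof -
  assume x: "x \<in> U" and T: "sm2 U T"
  have T': "sm2 U (\<lambda>y p q. T y q p)" using T unfolding sm2_def by auto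
  have "cov2 g (\<lambda>y p q. (T y p q + T y q p) / 2) c i j x = cov2 g (\<lambda>y p q. (1/2) * (T y p q + T y q p)) c i j x"
    by simp
  also have "\<dots> = (1/2) * cov2 g (\<lambda>y p q. T y p q + T y q p) c i j x"
    using cov2_fT[OF x, of "\<lambda>_. 1/2" "\<lambda>y p q. T y p q + T y q p" c i j] T T' U_open
    by (simp add: pd_const sm2_def sm_add)
  also have "\<dots> = (1/2) * (cov2 g T c i j x + cov2 g (\<lambda>y p q. T y q p) c i j x)"
    using cov2_add[OF x T T'] by simp
  also have "cov2 g (\<lambda>y p q. T y q p) c i j x = cov2 g T c j i x"
    unfolding cov2_def by (simp add: algebra_simps)
  finally show ?thesis by simp
qed

lemma cov2_metric: "x \<in> U \<Longrightarrow> cov2 g (\<lambda>y p q. g y $ p $ q) c i j x = 0"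
  unfolding cov2_def using dg_formula[of x c i j] g_sym
  by (simp add: mult.commute)

end



definition LL :: "('n::finite \<Rightarrow> 'n \<Rightarrow> real) \<Rightarrow> ('n \<Rightarrow> 'n \<Rightarrow> real) \<Rightarrow> real" where
  "LL h f = (\<Sum>b\<in>UNIV. \<Sum>c\<in>UNIV. h b c * f b c)"

lemma LL_add: "LL h (\<lambda>b c. f b c + g b c) = LL h f + LL h g"
  unfolding LL_def by (simp add: ring_distribs sum.distrib)
lemma LL_diff: "LL h (\<lambda>b c. f b c - g b c) = LL h f - LL h g"
  unfolding LL_def by (simp add: ring_distribs sum_subtractf)
lemma LL_cmul: "LL h (\<lambda>b c. k * f b c) = k * LL h f"
  unfolding LL_def by (simp add: sum_distrib_left mult_ac)

lemma sym_LL_zero: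
  fixes h E :: "'n::finite \<Rightarrow> 'n \<Rightarrow> real"
  assumes "\<And>b c. h b c = h c b" "\<And>b c. E b c + E c b = 0"
  shows "LL h E = 0"
proof -
  have "LL h E = (\<Sum>c\<in>UNIV. \<Sum>b\<in>UNIV. h b c * E b c)" unfolding LL_def by (rule sum.swap)
  also have "\<dots> = LL h (\<lambda>b c. E c b)" unfolding LL_def by (simp add: assms(1)[of _ b for b])
  finally have e: "LL h E = LL h (\<lambda>b c. E c b)" .
  have "LL h (\<lambda>b c. E b c + E c b) = LL h E + LL h (\<lambda>b c. E c b)" by (rule LL_add)
  moreover have "LL h (\<lambda>b c. E b c + E c b) = 0" by (simp add: assms(2) LL_def)
  ultimately show ?thesis using e by simp
qed

lemma final_alg:
  fixes h Hs DX :: "'n::finite \<Rightarrow> 'n \<Rightarrow> real" and X Ga :: "'n \<Rightarrow> real"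
    and DDX HH :: "'n \<Rightarrow> 'n \<Rightarrow> 'n \<Rightarrow> real" and G lam :: real and a :: 'n
    and K :: "'n \<Rightarrow> real" and DK :: "'n \<Rightarrow> 'n \<Rightarrow> real" and DDK :: "'n \<Rightarrow> 'n \<Rightarrow> 'n \<Rightarrow> real"
  assumes hsym: "\<And>b c. h b c = h c b" and Hsym: "\<And>b c. Hs b c = Hs c b"
    and HHsym: "\<And>i b c. HH i b c = HH i c b"
    and G: "G > 0"
    and bian: "LL h (\<lambda>b c. (1/2) * (DX c a * X b + X a * DX c b) - (1/2) * (DDX c a b + DDX c b a))
      = (1/2) * LL h (\<lambda>b c. (1/2) * (DX a b * X c + X b * DX a c) - (1/2) * (DDX a b c + DDX a c b))"
    and c4: "LL h (\<lambda>b c. HH c a b) = LL h (\<lambda>b c. HH a b c)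
      + LL h (\<lambda>b c. ((1/2) * X a * X b - (1/2) * (DX a b + DX b a)) * Ga c) + lam * Ga a"
    and K_def: "\<And>i. K i = G * X i + Ga i"
    and DK_def: "\<And>i j. DK i j = G * DX i j + Ga i * X j + Hs i j"
    and DDK_def: "\<And>k i j. DDK k i j = Ga k * DX i j + G * DDX k i j + Hs k i * X j + Ga i * DX k j + HH k i j"
  shows "(Ga a * ((LL h (\<lambda>b c. X b * X c) / 2 - LL h DX / 2 + lam) - LL h (\<lambda>b c. K b * K c) / G^2)
      + G * ((LL h (\<lambda>b c. DX a b * X c + X b * DX a c) / 2 - LL h (DDX a) / 2)
         - (LL h (\<lambda>b c. DK a b * K c + K b * DK a c) / G^2 - 2 * LL h (\<lambda>b c. K b * K c) * Ga a / G^3)))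
    + (1 / (2 * G)) * (LL h (\<lambda>b c. Hs a b * K c + Ga b * DK a c) - (K a + Ga a) / G * LL h (\<lambda>b c. K c * Ga b))
    - (LL h (\<lambda>b c. (DDK c a b + DDK c b a) / 2) - LL h (\<lambda>b c. K c * ((DK a b + DK b a) / 2)) / G)
    + (LL h (DDK a) + (K a - Ga a) / (2 * G) * LL h DK) = 0"
proof -
  define e1 where "e1 b c = (1/2) * (DX c a * X b + X a * DX c b) - (1/2) * (DDX c a b + DDX c b a)" for b c
  define e2 where "e2 b c = (1/2) * (DX a b * X c + X b * DX a c) - (1/2) * (DDX a b c + DDX a c b)" for b c
  define e5 where "e5 b c = ((1/2) * X a * X b - (1/2) * (DX a b + DX b a)) * Ga c" for b c
  define E where "E b c = G * e1 b c - (G / 2) * e2 b c - HH c a b + HH a b c + e5 b c" for b c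
  have z: "LL h E = - lam * Ga a"
  proof -
    have "LL h E = G * LL h e1 - (G / 2) * LL h e2 - LL h (\<lambda>b c. HH c a b) + LL h (\<lambda>b c. HH a b c) + LL h e5"
      unfolding E_def by (simp only: LL_add LL_diff LL_cmul)
    then show ?thesis using bian c4 unfolding e1_def[symmetric] e2_def[symmetric] e5_def[symmetric] by simp
  qed
  define P where "P b c = (G^2 * Ga a) * (X b * X c) - (G^2 * Ga a) * DX b c + (2 * Ga a) * (K b * K c)
     + G^3 * (DX a b * X c + X b * DX a c) - G^3 * DDX a b c - (2 * G) * (DK a b * K c + K b * DK a c)
     + G * (Hs a b * K c + Ga b * DK a c) - (K a + Ga a) * (K c * Ga b) - G^2 * (DDK c a b + DDK c b a)
     + G * (K c * (DK a b + DK b a)) + (2 * G^2) * DDK a b c + (G * (K a - Ga a)) * DK b c" for b c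
  have LP: "LL h P = (G^2 * Ga a) * LL h (\<lambda>b c. X b * X c) - (G^2 * Ga a) * LL h DX + (2 * Ga a) * LL h (\<lambda>b c. K b * K c)
     + G^3 * LL h (\<lambda>b c. DX a b * X c + X b * DX a c) - G^3 * LL h (DDX a) - (2 * G) * LL h (\<lambda>b c. DK a b * K c + K b * DK a c)
     + G * LL h (\<lambda>b c. Hs a b * K c + Ga b * DK a c) - (K a + Ga a) * LL h (\<lambda>b c. K c * Ga b)
     - G^2 * LL h (\<lambda>b c. DDK c a b + DDK c b a) + G * LL h (\<lambda>b c. K c * (DK a b + DK b a))
     + (2 * G^2) * LL h (DDK a) + (G * (K a - Ga a)) * LL h DK"
    unfolding P_def by (simp only: LL_add LL_diff LL_cmul)
  have half1: "LL h (\<lambda>b c. (DDK c a b + DDK c b a) / 2) = (1/2) * LL h (\<lambda>b c. DDK c a b + DDK c b a)"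
    using LL_cmul[of h "1/2" "\<lambda>b c. DDK c a b + DDK c b a"] by simp
  have half2: "LL h (\<lambda>b c. K c * ((DK a b + DK b a) / 2)) = (1/2) * LL h (\<lambda>b c. K c * (DK a b + DK b a))"
    using LL_cmul[of h "1/2" "\<lambda>b c. K c * (DK a b + DK b a)"] by (simp add: mult_ac)
  have goal: "2 * G^2 * ((Ga a * ((LL h (\<lambda>b c. X b * X c) / 2 - LL h DX / 2 + lam) - LL h (\<lambda>b c. K b * K c) / G^2)
      + G * ((LL h (\<lambda>b c. DX a b * X c + X b * DX a c) / 2 - LL h (DDX a) / 2)
         - (LL h (\<lambda>b c. DK a b * K c + K b * DK a c) / G^2 - 2 * LL h (\<lambda>b c. K b * K c) * Ga a / G^3)))
    + (1 / (2 * G)) * (LL h (\<lambda>b c. Hs a b * K c + Ga b * DK a c) - (K a + Ga a) / G * LL h (\<lambda>b c. K c * Ga b))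
    - (LL h (\<lambda>b c. (DDK c a b + DDK c b a) / 2) - LL h (\<lambda>b c. K c * ((DK a b + DK b a) / 2)) / G)
    + (LL h (DDK a) + (K a - Ga a) / (2 * G) * LL h DK)) = 2 * G^2 * lam * Ga a + LL h P"
    unfolding LP half1 half2
    using G by (simp add: field_simps power2_eq_square power3_eq_cube)
  have w: "(P b c - 2 * G^2 * E b c) + (P c b - 2 * G^2 * E c b) = 0" for b c
    unfolding P_def E_def e1_def e2_def e5_def K_def DK_def DDK_def
    by (simp add: Hsym[of c b] Hsym[of a c] Hsym[of a b] HHsym[of b c a] HHsym[of c b a] HHsym[of a c b] algebra_simps power2_eq_square power3_eq_cube)
  have "LL h P = LL h (\<lambda>b c. P b c - 2 * G^2 * E b c) + 2 * G^2 * LL h E" by (simp add: LL_diff LL_cmul)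
  also have "\<dots> = 2 * G^2 * (- lam * Ga a)" using sym_LL_zero[of h "\<lambda>b c. P b c - 2 * G^2 * E b c", OF hsym w] z by simp
  finally have "LL h P = - (2 * G^2 * lam * Ga a)" by simp
  then have "2 * G^2 * ((Ga a * ((LL h (\<lambda>b c. X b * X c) / 2 - LL h DX / 2 + lam) - LL h (\<lambda>b c. K b * K c) / G^2)
      + G * ((LL h (\<lambda>b c. DX a b * X c + X b * DX a c) / 2 - LL h (DDX a) / 2)
         - (LL h (\<lambda>b c. DK a b * K c + K b * DK a c) / G^2 - 2 * LL h (\<lambda>b c. K b * K c) * Ga a / G^3)))
    + (1 / (2 * G)) * (LL h (\<lambda>b c. Hs a b * K c + Ga b * DK a c) - (K a + Ga a) / G * LL h (\<lambda>b c. K c * Ga b))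
    - (LL h (\<lambda>b c. (DDK c a b + DDK c b a) / 2) - LL h (\<lambda>b c. K c * ((DK a b + DK b a) / 2)) / G)
    + (LL h (DDK a) + (K a - Ga a) / (2 * G) * LL h DK)) = 0" using goal by simp
  then show ?thesis using G by simp
qed



lemma swap13: "(\<Sum>b\<in>A. \<Sum>c\<in>B. \<Sum>k\<in>C. f b c k) = (\<Sum>k\<in>C. \<Sum>c\<in>B. \<Sum>b\<in>A. f b c k)"
proof -
  have "(\<Sum>b\<in>A. \<Sum>c\<in>B. \<Sum>k\<in>C. f b c k) = (\<Sum>b\<in>A. \<Sum>k\<in>C. \<Sum>c\<in>B. f b c k)"
    by (rule sum.cong[OF refl]) (rule sum.swap)
  also have "\<dots> = (\<Sum>k\<in>C. \<Sum>b\<in>A. \<Sum>c\<in>B. f b c k)" by (rule sum.swap)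
  also have "\<dots> = (\<Sum>k\<in>C. \<Sum>c\<in>B. \<Sum>b\<in>A. f b c k)" by (rule sum.cong[OF refl]) (rule sum.swap)
  finally show ?thesis .
qed

context metric begin

lemma pd_LL: "x \<in> U \<Longrightarrow> sm2 U T \<Longrightarrow>
  pd a (\<lambda>y. \<Sum>b\<in>UNIV. \<Sum>c\<in>UNIV. ginv g y $ b $ c * T y b c) x
   = (\<Sum>b\<in>UNIV. \<Sum>c\<in>UNIV. ginv g x $ b $ c * cov2 g T a b c x)"
proof -
  assume x: "x \<in> U" and T: "sm2 U T"
  let ?h = "\<lambda>b c. ginv g x $ b $ c"
  have dT: "\<And>b c. (\<lambda>y. T y b c) differentiable (at x)" using sm2_diffble[OF T x] .
  have dh: "\<And>b c. (\<lambda>y. ginv g y $ b $ c) differentiable (at x)" using sm_diffble[OF sm_ginv x] .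
  have l: "pd a (\<lambda>y. \<Sum>b\<in>UNIV. \<Sum>c\<in>UNIV. ginv g y $ b $ c * T y b c) x
     = (\<Sum>b\<in>UNIV. \<Sum>c\<in>UNIV. ?h b c * pd a (\<lambda>y. T y b c) x)
       - (\<Sum>b\<in>UNIV. \<Sum>c\<in>UNIV. \<Sum>k\<in>UNIV. chr g b a k x * ?h k c * T x b c)
       - (\<Sum>b\<in>UNIV. \<Sum>c\<in>UNIV. \<Sum>k\<in>UNIV. ?h b k * chr g c a k x * T x b c)"
    by (simp add: pd_sum pd_mult dT dh differentiable_mult differentiable_sum pd_ginv[OF x]
        ring_distribs sum.distrib sum_subtractf sum_distrib_left sum_distrib_right sum_negf mult_ac)
  have r: "(\<Sum>b\<in>UNIV. \<Sum>c\<in>UNIV. ?h b c * cov2 g T a b c x)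
     = (\<Sum>b\<in>UNIV. \<Sum>c\<in>UNIV. ?h b c * pd a (\<lambda>y. T y b c) x)
       - (\<Sum>b\<in>UNIV. \<Sum>c\<in>UNIV. \<Sum>k\<in>UNIV. ?h b c * chr g k a b x * T x k c)
       - (\<Sum>b\<in>UNIV. \<Sum>c\<in>UNIV. \<Sum>k\<in>UNIV. ?h b c * chr g k a c x * T x b k)"
    unfolding cov2_def by (simp add: ring_distribs sum.distrib sum_subtractf sum_distrib_left mult_ac)
  have e1: "(\<Sum>b\<in>UNIV. \<Sum>c\<in>UNIV. \<Sum>k\<in>UNIV. chr g b a k x * ?h k c * T x b c)
      = (\<Sum>b\<in>UNIV. \<Sum>c\<in>UNIV. \<Sum>k\<in>UNIV. ?h b c * chr g k a b x * T x k c)"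
    by (subst swap13) (simp add: mult_ac)
  have e2: "(\<Sum>b\<in>UNIV. \<Sum>c\<in>UNIV. \<Sum>k\<in>UNIV. ?h b k * chr g c a k x * T x b c)
      = (\<Sum>b\<in>UNIV. \<Sum>c\<in>UNIV. \<Sum>k\<in>UNIV. ?h b c * chr g k a c x * T x b k)"
    by (rule sum.cong[OF refl]) (subst sum.swap, simp add: mult_ac)
  show ?thesis using l r e1 e2 by simp
qed

end



lemma sm2_add: "open U \<Longrightarrow> sm2 U T1 \<Longrightarrow> sm2 U T2 \<Longrightarrow> sm2 U (\<lambda>y p q. T1 y p q + T2 y p q)"
  unfolding sm2_def by (auto intro: sm_add)
lemma sm2_cmul: "open U \<Longrightarrow> sm2 U T \<Longrightarrow> sm2 U (\<lambda>y p q. c * T y p q)"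
  unfolding sm2_def by (auto intro: sm_mult)

lemma cov2_transpose: "cov2 g (\<lambda>y p q. T y q p) c i j x = cov2 g T c j i x"
  unfolding cov2_def by (simp add: algebra_simps)

locale setting = metric U g for U :: "(real^'n::finite) set" and g +
  fixes X :: "real^'n \<Rightarrow> real^'n" and Gam :: "real^'n \<Rightarrow> real" and lam :: real
  assumes X_smooth: "\<forall>i. smooth_on U (\<lambda>x. X x $ i)"
    and Gam_smooth: "smooth_on U Gam"
    and Gam_pos: "\<forall>x\<in>U. Gam x > 0"
    and soliton: "\<forall>x\<in>U. \<forall>a b. ricci g a b x
                    = (1/2) * X x $ a * X x $ b - symcov g X a b x + lam * g x $ a $ b"
begin

definition gradG :: "real^'n \<Rightarrow> real^'n" where "gradG y = (\<chi> i. pd i Gam y)"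

lemma gradG_nth[simp]: "gradG y $ i = pd i Gam y" by (simp add: gradG_def)

lemma smV_X: "smV U X" unfolding smV_def using X_smooth by (simp add: sm_smooth_on)
lemma sm_Gam: "sm U Gam" using Gam_smooth by (simp add: sm_smooth_on)
lemma sm_pdGam: "sm U (pd i Gam)" using sm_pd[OF sm_Gam] .
lemma smV_gradG: "smV U gradG" unfolding smV_def using sm_pdGam by simp
lemma smV_K: "smV U (Kf X Gam)"
  unfolding smV_def Kf_def using sm_Gam smV_X sm_pdGam U_open unfolding smV_def
  by (auto intro!: sm_add sm_mult)

lemma cov1_K: "x \<in> U \<Longrightarrow> cov1 g (Kf X Gam) i j x = Gam x * cov1 g X i j x + pd i Gam x * X x $ j + cov1 g gradG i j x"
proof -
  assume x: "x \<in> U"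
  have "pd i (\<lambda>y. Kf X Gam y $ j) x = pd i (\<lambda>y. Gam y * X y $ j + pd j Gam y) x" by (simp add: Kf_def)
  also have "\<dots> = pd i Gam x * X x $ j + Gam x * pd i (\<lambda>y. X y $ j) x + pd i (pd j Gam) x"
    using sm_diffble[OF sm_Gam x] smV_diffble[OF smV_X x] sm_diffble[OF sm_pdGam x]
    by (simp add: pd_add pd_mult differentiable_mult)
  finally have "pd i (\<lambda>y. Kf X Gam y $ j) x = pd i Gam x * X x $ j + Gam x * pd i (\<lambda>y. X y $ j) x + pd i (pd j Gam) x" .
  moreover have "pd i (\<lambda>y. gradG y $ j) x = pd i (pd j Gam) x" by (simp add: gradG_nth)
  ultimately show ?thesis unfolding cov1_def
    by (simp add: Kf_def ring_distribs sum.distrib sum_distrib_left mult_ac)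
qed

lemma sm2_Kten: "sm2 U (\<lambda>y p q. Gam y * cov1 g X p q y + gradG y $ p * X y $ q + cov1 g gradG p q y)"
  using sm2_cov1[OF smV_X] sm2_cov1[OF smV_gradG] sm_Gam smV_X smV_gradG U_open
  unfolding sm2_def smV_def by (auto intro!: sm_add sm_mult)

lemma cov2_K: "x \<in> U \<Longrightarrow> cov2 g (\<lambda>y p q. cov1 g (Kf X Gam) p q y) k i j x
  = pd k Gam x * cov1 g X i j x + Gam x * cov2 g (\<lambda>y p q. cov1 g X p q y) k i j x
    + cov1 g gradG k i x * X x $ j + pd i Gam x * cov1 g X k j x + cov2 g (\<lambda>y p q. cov1 g gradG p q y) k i j x"
proof -
  assume x: "x \<in> U"
  have "cov2 g (\<lambda>y p q. cov1 g (Kf X Gam) p q y) k i j x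
     = cov2 g (\<lambda>y p q. (Gam y * cov1 g X p q y + gradG y $ p * X y $ q) + cov1 g gradG p q y) k i j x"
    by (rule cov2_cong[OF x]) (simp add: cov1_K)
  also have "\<dots> = cov2 g (\<lambda>y p q. Gam y * cov1 g X p q y + gradG y $ p * X y $ q) k i j x
      + cov2 g (\<lambda>y p q. cov1 g gradG p q y) k i j x"
    using sm2_cov1[OF smV_X] sm2_cov1[OF smV_gradG] sm_Gam smV_X smV_gradG U_open
    by (intro cov2_add[OF x]) (auto simp: sm2_def smV_def intro!: sm_add sm_mult)
  also have "cov2 g (\<lambda>y p q. Gam y * cov1 g X p q y + gradG y $ p * X y $ q) k i j x
      = cov2 g (\<lambda>y p q. Gam y * cov1 g X p q y) k i j x + cov2 g (\<lambda>y p q. gradG y $ p * X y $ q) k i j x"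
    using sm2_cov1[OF smV_X] sm_Gam smV_X smV_gradG U_open
    by (intro cov2_add[OF x]) (auto simp: sm2_def smV_def intro!: sm_add sm_mult)
  also have "cov2 g (\<lambda>y p q. Gam y * cov1 g X p q y) k i j x
      = pd k Gam x * cov1 g X i j x + Gam x * cov2 g (\<lambda>y p q. cov1 g X p q y) k i j x"
    by (rule cov2_fT[OF x sm_Gam sm2_cov1[OF smV_X]])
  also have "cov2 g (\<lambda>y p q. gradG y $ p * X y $ q) k i j x = cov1 g gradG k i x * X x $ j + gradG x $ i * cov1 g X k j x"
    by (rule cov2_uv[OF x smV_gradG smV_X])
  finally show ?thesis by (simp add: add.assoc)
qed

lemma Hs_sym: "x \<in> U \<Longrightarrow> cov1 g gradG i j x = cov1 g gradG j i x"
proof -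
  assume x: "x \<in> U"
  have "pd i (\<lambda>y. gradG y $ j) x = pd j (\<lambda>y. gradG y $ i) x"
    using sm_schwarz[OF U_open x sm_Gam, of i j] by (simp add: gradG_nth)
  then show ?thesis unfolding cov1_def by (simp add: chr_sym[OF x, of _ i j])
qed

lemma HH_sym: "x \<in> U \<Longrightarrow> cov2 g (\<lambda>y p q. cov1 g gradG p q y) k i j x = cov2 g (\<lambda>y p q. cov1 g gradG p q y) k j i x"
proof -
  assume x: "x \<in> U"
  have "cov2 g (\<lambda>y p q. cov1 g gradG p q y) k i j x = cov2 g (\<lambda>y p q. cov1 g gradG q p y) k i j x"
    by (rule cov2_cong[OF x]) (simp add: Hs_sym)
  also have "\<dots> = cov2 g (\<lambda>y p q. cov1 g gradG p q y) k j i x" by (rule cov2_transpose)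
  finally show ?thesis .
qed

lemma dsoliton: "x \<in> U \<Longrightarrow> cov2 g (\<lambda>y p q. ricci g p q y) c i j x
  = (1/2) * (cov1 g X c i x * X x $ j + X x $ i * cov1 g X c j x)
    - (1/2) * (cov2 g (\<lambda>y p q. cov1 g X p q y) c i j x + cov2 g (\<lambda>y p q. cov1 g X p q y) c j i x)"
proof -
  assume x: "x \<in> U"
  let ?XX = "\<lambda>y p q. X y $ p * X y $ q"
  let ?S = "\<lambda>y p q. (cov1 g X p q y + cov1 g X q p y) / 2"
  let ?g = "\<lambda>y p q. g y $ p $ q"
  have s2XX: "sm2 U ?XX" using smV_X U_open unfolding sm2_def smV_def by (auto intro!: sm_mult)
  have s2S: "sm2 U ?S" using sm2_cov1[OF smV_X] U_open unfolding sm2_def by (auto intro!: sm_add sm_mult sm_divide)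
  have s2g: "sm2 U ?g" using sm_g unfolding sm2_def by auto
  have "cov2 g (\<lambda>y p q. ricci g p q y) c i j x
      = cov2 g (\<lambda>y p q. ((1/2) * ?XX y p q + (-1) * ?S y p q) + lam * ?g y p q) c i j x"
    by (rule cov2_cong[OF x]) (simp add: soliton symcov_def field_simps)
  also have "\<dots> = cov2 g (\<lambda>y p q. (1/2) * ?XX y p q + (-1) * ?S y p q) c i j x + cov2 g (\<lambda>y p q. lam * ?g y p q) c i j x"
    by (intro cov2_add[OF x] sm2_add sm2_cmul U_open s2XX s2S s2g)
  also have "cov2 g (\<lambda>y p q. (1/2) * ?XX y p q + (-1) * ?S y p q) c i j x
     = cov2 g (\<lambda>y p q. (1/2) * ?XX y p q) c i j x + cov2 g (\<lambda>y p q. (-1) * ?S y p q) c i j x"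
    by (intro cov2_add[OF x] sm2_add sm2_cmul U_open s2XX s2S s2g)
  also have "cov2 g (\<lambda>y p q. (1/2) * ?XX y p q) c i j x = (1/2) * cov2 g ?XX c i j x"
    using cov2_fT[OF x _ s2XX, of "\<lambda>_. 1/2"] U_open by (simp add: pd_const)
  also have "cov2 g (\<lambda>y p q. (-1) * ?S y p q) c i j x = (-1) * cov2 g ?S c i j x"
    using cov2_fT[OF x _ s2S, of "\<lambda>_. -1"] U_open by (simp add: pd_const)
  also have "cov2 g (\<lambda>y p q. lam * ?g y p q) c i j x = lam * cov2 g ?g c i j x"
    using cov2_fT[OF x _ s2g, of "\<lambda>_. lam"] U_open by (simp add: pd_const)
  also have "cov2 g ?XX c i j x = cov1 g X c i x * X x $ j + X x $ i * cov1 g X c j x"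
    by (rule cov2_uv[OF x smV_X smV_X])
  also have "cov2 g ?S c i j x = (cov2 g (\<lambda>y p q. cov1 g X p q y) c i j x + cov2 g (\<lambda>y p q. cov1 g X p q y) c j i x) / 2"
    by (rule cov2_symm[OF x sm2_cov1[OF smV_X]])
  finally show ?thesis using cov2_metric[OF x] by (simp add: field_simps)
qed

end



lemma pd_div_sq:
  assumes f: "f differentiable (at x)" and G: "G differentiable (at x)" and nz: "G x \<noteq> 0"
  shows "pd a (\<lambda>y. f y / (G y)^2) x = pd a f x / (G x)^2 - 2 * f x * pd a G x / (G x)^3"
proof -
  have G2: "(\<lambda>y. (G y)^2) differentiable (at x)" using G by (simp add: power2_eq_square differentiable_mult)
  have "pd a (\<lambda>y. f y / (G y)^2) x = pd a (\<lambda>y. f y * inverse ((G y)^2)) x" by (simp add: divide_inverse)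
  also have "\<dots> = pd a f x * inverse ((G x)^2) + f x * pd a (\<lambda>y. inverse ((G y)^2)) x"
    using f G2 nz by (simp add: pd_mult differentiable_inverse)
  also have "pd a (\<lambda>y. inverse ((G y)^2)) x = - (pd a (\<lambda>y. (G y)^2) x / ((G x)^2)^2)"
    using G2 nz by (simp add: pd_inverse)
  also have "pd a (\<lambda>y. (G y)^2) x = 2 * G x * pd a G x"
    using G by (simp add: power2_eq_square pd_mult)
  finally show ?thesis using nz by (simp add: field_simps power2_eq_square power3_eq_cube)
qed

lemma pd_div_const: "f differentiable (at x) \<Longrightarrow> pd a (\<lambda>y. f y / c) x = pd a f x / c"
  using pd_mult[of f x "\<lambda>_. inverse c" a] by (simp add: pd_const divide_inverse)

context setting begin

lemma sm_LL: "sm2 U T \<Longrightarrow> sm U (\<lambda>y. \<Sum>b\<in>UNIV. \<Sum>c\<in>UNIV. ginv g y $ b $ c * T y b c)"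
  using sm_ginv U_open unfolding sm2_def by (auto intro!: sm_sum sm_mult)

lemma sm2_uv: "smV U u \<Longrightarrow> smV U v \<Longrightarrow> sm2 U (\<lambda>y p q. u y $ p * v y $ q)"
  using U_open unfolding sm2_def smV_def by (auto intro!: sm_mult)

lemma normsq_LL: "normsq g w = (\<lambda>y. \<Sum>b\<in>UNIV. \<Sum>c\<in>UNIV. ginv g y $ b $ c * (w y $ b * w y $ c))"
  by (simp add: normsq_def[abs_def] mult.assoc)

lemma div1_LL: "div1 g w = (\<lambda>y. \<Sum>b\<in>UNIV. \<Sum>c\<in>UNIV. ginv g y $ b $ c * cov1 g w b c y)"
  by (simp add: div1_def[abs_def])

lemma sm_normsq: "smV U w \<Longrightarrow> sm U (normsq g w)"
  unfolding normsq_LL by (rule sm_LL[OF sm2_uv])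

lemma sm_div1: "smV U w \<Longrightarrow> sm U (div1 g w)"
  unfolding div1_LL by (rule sm_LL[OF sm2_cov1])

lemma pd_normsq: "x \<in> U \<Longrightarrow> smV U w \<Longrightarrow> pd a (normsq g w) x
   = LL (\<lambda>b c. ginv g x $ b $ c) (\<lambda>b c. cov1 g w a b x * w x $ c + w x $ b * cov1 g w a c x)"
  unfolding normsq_LL LL_def by (simp add: pd_LL sm2_uv cov2_uv)

lemma pd_div1: "x \<in> U \<Longrightarrow> smV U w \<Longrightarrow> pd a (div1 g w) x
   = LL (\<lambda>b c. ginv g x $ b $ c) (\<lambda>b c. cov2 g (\<lambda>y p q. cov1 g w p q y) a b c x)"
  unfolding div1_LL LL_def by (simp add: pd_LL sm2_cov1)

end



context setting begin

abbreviation "hh x \<equiv> (\<lambda>b c. ginv g x $ b $ c)"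

lemma normsq_val: "normsq g w x = LL (hh x) (\<lambda>b c. w x $ b * w x $ c)"
  by (simp add: normsq_def LL_def mult.assoc)
lemma div1_val: "div1 g w x = LL (hh x) (\<lambda>b c. cov1 g w b c x)"
  by (simp add: div1_def LL_def)

lemma sm_Ff: "sm U (Ff g X lam)"
proof -
  have "sm U (\<lambda>y. normsq g X y / 2 - div1 g X y / 2 + lam)"
    using sm_normsq[OF smV_X] sm_div1[OF smV_X] U_open by (intro sm_add sm_diff sm_divide sm_const) auto
  then show ?thesis by (simp add: Ff_def[abs_def])
qed

lemma T1: "x \<in> U \<Longrightarrow> pd a (Af g X Gam lam) x =
  pd a Gam x * ((LL (hh x) (\<lambda>b c. X x $ b * X x $ c) / 2 - LL (hh x) (\<lambda>b c. cov1 g X b c x) / 2 + lam)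
      - LL (hh x) (\<lambda>b c. Kf X Gam x $ b * Kf X Gam x $ c) / (Gam x)^2)
  + Gam x * ((LL (hh x) (\<lambda>b c. cov1 g X a b x * X x $ c + X x $ b * cov1 g X a c x) / 2
       - LL (hh x) (\<lambda>b c. cov2 g (\<lambda>y p q. cov1 g X p q y) a b c x) / 2)
     - (LL (hh x) (\<lambda>b c. cov1 g (Kf X Gam) a b x * Kf X Gam x $ c + Kf X Gam x $ b * cov1 g (Kf X Gam) a c x) / (Gam x)^2
        - 2 * LL (hh x) (\<lambda>b c. Kf X Gam x $ b * Kf X Gam x $ c) * pd a Gam x / (Gam x)^3))"
proof -
  assume x: "x \<in> U"
  have G0: "Gam x \<noteq> 0" using Gam_pos x by auto
  have dG: "Gam differentiable (at x)" by (rule sm_diffble[OF sm_Gam x])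
  have dnX: "normsq g X differentiable (at x)" by (rule sm_diffble[OF sm_normsq[OF smV_X] x])
  have ddX: "div1 g X differentiable (at x)" by (rule sm_diffble[OF sm_div1[OF smV_X] x])
  have dnK: "normsq g (Kf X Gam) differentiable (at x)" by (rule sm_diffble[OF sm_normsq[OF smV_K] x])
  have dF: "Ff g X lam differentiable (at x)" by (rule sm_diffble[OF sm_Ff x])
  have sQ: "sm U (\<lambda>y. normsq g (Kf X Gam) y / (Gam y)^2)"
    using sm_normsq[OF smV_K] sm_Gam Gam_pos U_open by (intro sm_divide sm_mult) (auto simp: power2_eq_square)
  have dQ: "(\<lambda>y. normsq g (Kf X Gam) y / (Gam y)^2) differentiable (at x)" by (rule sm_diffble[OF sQ x])
  have A: "Af g X Gam lam = (\<lambda>y. Gam y * (Ff g X lam y - normsq g (Kf X Gam) y / (Gam y)^2))"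
    by (simp add: Af_def[abs_def])
  have "pd a (Af g X Gam lam) x = pd a Gam x * (Ff g X lam x - normsq g (Kf X Gam) x / (Gam x)^2)
      + Gam x * (pd a (Ff g X lam) x - pd a (\<lambda>y. normsq g (Kf X Gam) y / (Gam y)^2) x)"
    unfolding A using dG dF dQ by (simp add: pd_mult pd_diff differentiable_diff)
  also have "pd a (Ff g X lam) x = pd a (normsq g X) x / 2 - pd a (div1 g X) x / 2"
  proof -
    have "Ff g X lam = (\<lambda>y. (normsq g X y / 2 - div1 g X y / 2) + lam)" by (simp add: Ff_def[abs_def])
    then show ?thesis using dnX ddX
      by (simp add: pd_add pd_diff pd_const pd_div_const differentiable_diff differentiable_divide)
  qed
  also have "pd a (\<lambda>y. normsq g (Kf X Gam) y / (Gam y)^2) x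
     = pd a (normsq g (Kf X Gam)) x / (Gam x)^2 - 2 * normsq g (Kf X Gam) x * pd a Gam x / (Gam x)^3"
    by (rule pd_div_sq[OF dnK dG G0])
  finally have eq: "pd a (Af g X Gam lam) x = pd a Gam x * (Ff g X lam x - normsq g (Kf X Gam) x / (Gam x)\<^sup>2) +
    Gam x * (pd a (normsq g X) x / 2 - pd a (div1 g X) x / 2 -
     (pd a (normsq g (Kf X Gam)) x / (Gam x)\<^sup>2 - 2 * normsq g (Kf X Gam) x * pd a Gam x / Gam x ^ 3))" .
  show ?thesis unfolding eq pd_normsq[OF x smV_X] pd_normsq[OF x smV_K] pd_div1[OF x smV_X]
    by (simp add: Ff_def normsq_val div1_val)
qed

end



context setting begin

lemma raise_nth: "raise g w y $ b = (\<Sum>c\<in>UNIV. ginv g y $ b $ c * w y $ c)"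
  by (simp add: raise_def matrix_vector_mult_def)

lemma KG_fun: "(\<lambda>y. \<Sum>b\<in>UNIV. raise g (Kf X Gam) y $ b * pd b Gam y)
   = (\<lambda>y. \<Sum>b\<in>UNIV. \<Sum>c\<in>UNIV. ginv g y $ b $ c * (gradG y $ b * Kf X Gam y $ c))"
  by (simp add: raise_nth sum_distrib_right sum_distrib_left mult_ac)

lemma T2a: "x \<in> U \<Longrightarrow> pd a (\<lambda>y. \<Sum>b\<in>UNIV. raise g (Kf X Gam) y $ b * pd b Gam y) x
  = LL (hh x) (\<lambda>b c. cov1 g gradG a b x * Kf X Gam x $ c + pd b Gam x * cov1 g (Kf X Gam) a c x)"
proof -
  assume x: "x \<in> U"
  have "pd a (\<lambda>y. \<Sum>b\<in>UNIV. \<Sum>c\<in>UNIV. ginv g y $ b $ c * (gradG y $ b * Kf X Gam y $ c)) x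
     = (\<Sum>b\<in>UNIV. \<Sum>c\<in>UNIV. ginv g x $ b $ c * cov2 g (\<lambda>y p q. gradG y $ p * Kf X Gam y $ q) a b c x)"
    by (rule pd_LL[OF x sm2_uv[OF smV_gradG smV_K]])
  then show ?thesis unfolding KG_fun LL_def cov2_uv[OF x smV_gradG smV_K] by simp
qed

lemma T2b: "(\<Sum>b\<in>UNIV. raise g (Kf X Gam) x $ b * pd b Gam x) = LL (hh x) (\<lambda>b c. Kf X Gam x $ c * pd b Gam x)"
  unfolding LL_def by (simp add: raise_nth sum_distrib_right sum_distrib_left mult_ac)

lemma T3a: "x \<in> U \<Longrightarrow> (\<Sum>b\<in>UNIV. \<Sum>c\<in>UNIV. ginv g x $ b $ c * cov2 g (\<lambda>y p q. symcov g (Kf X Gam) p q y) c a b x)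
  = LL (hh x) (\<lambda>b c. (cov2 g (\<lambda>y p q. cov1 g (Kf X Gam) p q y) c a b x + cov2 g (\<lambda>y p q. cov1 g (Kf X Gam) p q y) c b a x) / 2)"
  unfolding LL_def symcov_def by (simp add: cov2_symm sm2_cov1 smV_K)

lemma T3b: "(\<Sum>b\<in>UNIV. raise g (Kf X Gam) x $ b * symcov g (Kf X Gam) a b x)
  = LL (hh x) (\<lambda>b c. Kf X Gam x $ c * ((cov1 g (Kf X Gam) a b x + cov1 g (Kf X Gam) b a x) / 2))"
  unfolding LL_def symcov_def by (simp add: raise_nth sum_distrib_right sum_distrib_left sum_divide_distrib mult_ac)

lemma T4a: "x \<in> U \<Longrightarrow> pd a (div1 g (Kf X Gam)) x = LL (hh x) (\<lambda>b c. cov2 g (\<lambda>y p q. cov1 g (Kf X Gam) p q y) a b c x)"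
  by (rule pd_div1[OF _ smV_K])

lemma bianLL: "x \<in> U \<Longrightarrow>
   LL (hh x) (\<lambda>b c. (1/2) * (cov1 g X c a x * X x $ b + X x $ a * cov1 g X c b x)
     - (1/2) * (cov2 g (\<lambda>y p q. cov1 g X p q y) c a b x + cov2 g (\<lambda>y p q. cov1 g X p q y) c b a x))
   = (1/2) * LL (hh x) (\<lambda>b c. (1/2) * (cov1 g X a b x * X x $ c + X x $ b * cov1 g X a c x)
     - (1/2) * (cov2 g (\<lambda>y p q. cov1 g X p q y) a b c x + cov2 g (\<lambda>y p q. cov1 g X p q y) a c b x))"
  using contracted_bianchi[of x a] unfolding LL_def by (simp add: dsoliton)

lemma c4_aux: "x \<in> U \<Longrightarrow> (\<Sum>b\<in>UNIV. \<Sum>c\<in>UNIV. ginv g x $ b $ c * (w x v* Rmm c a x) $ b)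
   = - (\<Sum>b\<in>UNIV. \<Sum>c\<in>UNIV. ginv g x $ b $ c * (ricci g a b x * w x $ c))"
proof -
  assume x: "x \<in> U"
  let ?H = "ginv g x"
  have t: "(Rmm c a x ** ?H) $ l $ c = - (Rmm c a x ** ?H) $ c $ l" for c l
  proof -
    have "transpose (Rmm c a x ** ?H) $ c $ l = (- (Rmm c a x ** ?H)) $ c $ l" using RmH_antisym[OF x] by simp
    then show ?thesis by (simp add: transpose_def)
  qed
  have "(\<Sum>b\<in>UNIV. \<Sum>c\<in>UNIV. ?H $ b $ c * (w x v* Rmm c a x) $ b)
      = (\<Sum>b\<in>UNIV. \<Sum>c\<in>UNIV. \<Sum>l\<in>UNIV. w x $ l * Rmm c a x $ l $ b * ?H $ b $ c)"
    by (simp add: vm_nth sum_distrib_left mult_ac)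
  also have "\<dots> = (\<Sum>l\<in>UNIV. \<Sum>c\<in>UNIV. \<Sum>b\<in>UNIV. w x $ l * Rmm c a x $ l $ b * ?H $ b $ c)"
    by (rule swap13)
  also have "\<dots> = (\<Sum>l\<in>UNIV. w x $ l * (\<Sum>c\<in>UNIV. (Rmm c a x ** ?H) $ l $ c))"
    by (simp add: matrix_matrix_mult_def sum_distrib_left mult_ac)
  also have "\<dots> = - (\<Sum>l\<in>UNIV. w x $ l * (\<Sum>c\<in>UNIV. (Rmm c a x ** ?H) $ c $ l))"
    by (simp add: t sum_negf)
  also have "\<dots> = - (\<Sum>l\<in>UNIV. w x $ l * (\<Sum>b\<in>UNIV. ?H $ b $ l * ricci g b a x))"
  proof -
    have "(\<Sum>c\<in>UNIV. (Rmm c a x ** ?H) $ c $ l) = (\<Sum>b\<in>UNIV. ?H $ b $ l * ricci g b a x)" for l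
      by (simp add: matrix_matrix_mult_def ricci_Rmm[OF x] sum_distrib_left mult_ac) (rule sum.swap)
    then show ?thesis by simp
  qed
  also have "\<dots> = - (\<Sum>b\<in>UNIV. \<Sum>c\<in>UNIV. ?H $ b $ c * (ricci g a b x * w x $ c))"
  proof -
    have "(\<Sum>b\<in>UNIV. \<Sum>c\<in>UNIV. ?H $ b $ c * (ricci g a b x * w x $ c)) = (\<Sum>c\<in>UNIV. \<Sum>b\<in>UNIV. ?H $ b $ c * (ricci g a b x * w x $ c))"
      by (rule sum.swap)
    then show ?thesis by (simp add: sum_distrib_left ricci_sym[OF x, of a] mult_ac)
  qed
  finally show ?thesis .
qed

end



context setting begin

lemma c4LL: "x \<in> U \<Longrightarrow>
  LL (hh x) (\<lambda>b c. cov2 g (\<lambda>y p q. cov1 g gradG p q y) c a b x)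
  = LL (hh x) (\<lambda>b c. cov2 g (\<lambda>y p q. cov1 g gradG p q y) a b c x)
    + LL (hh x) (\<lambda>b c. ((1/2) * X x $ a * X x $ b - (1/2) * (cov1 g X a b x + cov1 g X b a x)) * pd c Gam x)
    + lam * pd a Gam x"
proof -
  assume x: "x \<in> U"
  let ?HH = "\<lambda>k i j. cov2 g (\<lambda>y p q. cov1 g gradG p q y) k i j x"
  have ri: "?HH c a b - ?HH a c b = - (gradG x v* Rmm c a x) $ b" for b c
    by (rule ricci_identity[OF x smV_gradG])
  have "LL (hh x) (\<lambda>b c. ?HH c a b) - LL (hh x) (\<lambda>b c. ?HH a c b) = LL (hh x) (\<lambda>b c. ?HH c a b - ?HH a c b)"
    by (simp add: LL_diff)
  also have "\<dots> = - (\<Sum>b\<in>UNIV. \<Sum>c\<in>UNIV. ginv g x $ b $ c * (gradG x v* Rmm c a x) $ b)"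
    unfolding LL_def ri by (simp add: sum_negf)
  also have "\<dots> = (\<Sum>b\<in>UNIV. \<Sum>c\<in>UNIV. ginv g x $ b $ c * (ricci g a b x * gradG x $ c))"
    by (simp add: c4_aux[OF x])
  also have "\<dots> = LL (hh x) (\<lambda>b c. ((1/2) * X x $ a * X x $ b - (1/2) * (cov1 g X a b x + cov1 g X b a x)) * pd c Gam x)
      + lam * (\<Sum>b\<in>UNIV. \<Sum>c\<in>UNIV. ginv g x $ b $ c * (g x $ a $ b * pd c Gam x))"
  proof -
    have sol: "ricci g a b x = ((1/2) * X x $ a * X x $ b - (1/2) * (cov1 g X a b x + cov1 g X b a x)) + lam * g x $ a $ b" for b
      using soliton x by (simp add: symcov_def)
    have "(\<Sum>b\<in>UNIV. \<Sum>c\<in>UNIV. ginv g x $ b $ c * (ricci g a b x * gradG x $ c))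
       = (\<Sum>b\<in>UNIV. \<Sum>c\<in>UNIV. ginv g x $ b $ c * (((1/2) * X x $ a * X x $ b - (1/2) * (cov1 g X a b x + cov1 g X b a x)) * pd c Gam x)
            + lam * (ginv g x $ b $ c * (g x $ a $ b * pd c Gam x)))"
      by (intro sum.cong refl) (simp only: sol gradG_nth, simp add: algebra_simps)
    then show ?thesis unfolding LL_def by (simp add: sum.distrib sum_distrib_left)
  qed
  also have "(\<Sum>b\<in>UNIV. \<Sum>c\<in>UNIV. ginv g x $ b $ c * (g x $ a $ b * pd c Gam x)) = pd a Gam x"
  proof -
    have "(\<Sum>b\<in>UNIV. \<Sum>c\<in>UNIV. ginv g x $ b $ c * (g x $ a $ b * pd c Gam x))
        = (\<Sum>c\<in>UNIV. (\<Sum>b\<in>UNIV. g x $ a $ b * ginv g x $ b $ c) * pd c Gam x)"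
      by (subst sum.swap) (simp add: sum_distrib_right sum_distrib_left mult_ac)
    also have "\<dots> = pd a Gam x" by (simp add: gh[OF x] delta_l')
    finally show ?thesis .
  qed
  finally have e: "LL (hh x) (\<lambda>b c. ?HH c a b) - LL (hh x) (\<lambda>b c. ?HH a c b)
     = LL (hh x) (\<lambda>b c. ((1/2) * X x $ a * X x $ b - (1/2) * (cov1 g X a b x + cov1 g X b a x)) * pd c Gam x)
       + lam * pd a Gam x" .
  have "LL (hh x) (\<lambda>b c. ?HH a c b) = LL (hh x) (\<lambda>b c. ?HH a b c)"
    unfolding LL_def by (simp add: HH_sym[OF x, of a _ _])
  then show ?thesis using e by simp
qed

lemma main_pt: "x \<in> U \<Longrightarrow>
    pd a (Af g X Gam lam) x
    + (1 / (2 * Gam x)) *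
        (pd a (\<lambda>y. \<Sum>b\<in>UNIV. raise g (Kf X Gam) y $ b * pd b Gam y) x
         - (Kf X Gam x $ a + pd a Gam x) / Gam x
             * (\<Sum>b\<in>UNIV. raise g (Kf X Gam) x $ b * pd b Gam x))
    - ((\<Sum>b\<in>UNIV. \<Sum>c\<in>UNIV. ginv g x $ b $ c *
          cov2 g (\<lambda>y p q. symcov g (Kf X Gam) p q y) c a b x)
       - (\<Sum>b\<in>UNIV. raise g (Kf X Gam) x $ b * symcov g (Kf X Gam) a b x) / Gam x)
    + (pd a (div1 g (Kf X Gam)) x
       + (Kf X Gam x $ a - pd a Gam x) / (2 * Gam x) * div1 g (Kf X Gam) x)
    = 0"
proof -
  assume x: "x \<in> U"
  have fa: "(pd a Gam x * ((LL (hh x) (\<lambda>b c. X x $ b * X x $ c) / 2 - LL (hh x) (\<lambda>b c. cov1 g X b c x) / 2 + lam)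
        - LL (hh x) (\<lambda>b c. Kf X Gam x $ b * Kf X Gam x $ c) / (Gam x)^2)
      + Gam x * ((LL (hh x) (\<lambda>b c. cov1 g X a b x * X x $ c + X x $ b * cov1 g X a c x) / 2
          - LL (hh x) (\<lambda>b c. cov2 g (\<lambda>y p q. cov1 g X p q y) a b c x) / 2)
         - (LL (hh x) (\<lambda>b c. cov1 g (Kf X Gam) a b x * Kf X Gam x $ c + Kf X Gam x $ b * cov1 g (Kf X Gam) a c x) / (Gam x)^2
            - 2 * LL (hh x) (\<lambda>b c. Kf X Gam x $ b * Kf X Gam x $ c) * pd a Gam x / (Gam x)^3)))
    + (1 / (2 * Gam x)) * (LL (hh x) (\<lambda>b c. cov1 g gradG a b x * Kf X Gam x $ c + pd b Gam x * cov1 g (Kf X Gam) a c x)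
         - (Kf X Gam x $ a + pd a Gam x) / Gam x * LL (hh x) (\<lambda>b c. Kf X Gam x $ c * pd b Gam x))
    - (LL (hh x) (\<lambda>b c. (cov2 g (\<lambda>y p q. cov1 g (Kf X Gam) p q y) c a b x + cov2 g (\<lambda>y p q. cov1 g (Kf X Gam) p q y) c b a x) / 2)
       - LL (hh x) (\<lambda>b c. Kf X Gam x $ c * ((cov1 g (Kf X Gam) a b x + cov1 g (Kf X Gam) b a x) / 2)) / Gam x)
    + (LL (hh x) (\<lambda>b c. cov2 g (\<lambda>y p q. cov1 g (Kf X Gam) p q y) a b c x)
       + (Kf X Gam x $ a - pd a Gam x) / (2 * Gam x) * LL (hh x) (\<lambda>b c. cov1 g (Kf X Gam) b c x)) = 0"
    by (rule final_alg[where h="hh x" and Hs="\<lambda>i j. cov1 g gradG i j x" and DX="\<lambda>i j. cov1 g X i j x"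
        and X="\<lambda>i. X x $ i" and Ga="\<lambda>i. pd i Gam x" and DDX="\<lambda>k i j. cov2 g (\<lambda>y p q. cov1 g X p q y) k i j x"
        and HH="\<lambda>k i j. cov2 g (\<lambda>y p q. cov1 g gradG p q y) k i j x" and G="Gam x" and lam=lam and a=a
        and K="\<lambda>i. Kf X Gam x $ i" and DK="\<lambda>i j. cov1 g (Kf X Gam) i j x"
        and DDK="\<lambda>k i j. cov2 g (\<lambda>y p q. cov1 g (Kf X Gam) p q y) k i j x",
        OF ginv_sym[OF x] Hs_sym[OF x] HH_sym[OF x] Gam_pos[rule_format, OF x] bianLL[OF x] c4LL[OF x]])
       (simp_all add: Kf_def cov1_K[OF x] cov2_K[OF x])
  show ?thesis
    unfolding T2a[OF x] unfolding T1[OF x] T2b T3a[OF x] T3b T4a[OF x] div1_val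
    using fa by simp
qed

end



theorem mainTheorem8:
  fixes U :: "(real^'n::finite) set"
    and g :: "real^'n \<Rightarrow> real^'n^'n"
    and X :: "real^'n \<Rightarrow> real^'n"
    and Gam :: "real^'n \<Rightarrow> real"
    and lam :: real
  assumes U_open: "open U"
    and g_sym: "\<forall>x\<in>U. \<forall>i j. g x $ i $ j = g x $ j $ i"
    and g_pos: "\<forall>x\<in>U. \<forall>v. v \<noteq> 0 \<longrightarrow> v \<bullet> (g x *v v) > 0"
    and g_smooth: "\<forall>i j. smooth_on U (\<lambda>x. g x $ i $ j)"
    and X_smooth: "\<forall>i. smooth_on U (\<lambda>x. X x $ i)"
    and Gam_smooth: "smooth_on U Gam"
    and Gam_pos: "\<forall>x\<in>U. Gam x > 0"
    and soliton: "\<forall>x\<in>U. \<forall>a b. ricci g a b x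
                    = (1/2) * X x $ a * X x $ b - symcov g X a b x + lam * g x $ a $ b"
  shows "\<forall>x\<in>U. \<forall>a.
    pd a (Af g X Gam lam) x
    + (1 / (2 * Gam x)) *
        (pd a (\<lambda>y. \<Sum>b\<in>UNIV. raise g (Kf X Gam) y $ b * pd b Gam y) x
         - (Kf X Gam x $ a + pd a Gam x) / Gam x
             * (\<Sum>b\<in>UNIV. raise g (Kf X Gam) x $ b * pd b Gam x))
    - ((\<Sum>b\<in>UNIV. \<Sum>c\<in>UNIV. ginv g x $ b $ c *
          cov2 g (\<lambda>y p q. symcov g (Kf X Gam) p q y) c a b x)
       - (\<Sum>b\<in>UNIV. raise g (Kf X Gam) x $ b * symcov g (Kf X Gam) a b x) / Gam x)
    + (pd a (div1 g (Kf X Gam)) x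
       + (Kf X Gam x $ a - pd a Gam x) / (2 * Gam x) * div1 g (Kf X Gam) x)
    = 0"
proof -
  interpret setting U g X Gam lam
    using U_open g_sym g_pos g_smooth X_smooth Gam_smooth Gam_pos soliton by unfold_locales
  show ?thesis using main_pt by blast
qed



end
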